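(* If $G$ is a melonic graph, then $d(G)=0$.
   Context: Trees. A 2-rooted ternary tree of order $n$ is a finite plane tree $U$ with a root vertex of degree 2 and $n$ true vertices of degree 4; each edge is internal or a leaf (half-edge). Each true vertex $v$ has parent edge $e_1(v)$ (towards the root) and ordered children edges $e_2(v),e_3(v),e_4(v)$. One root edge has type $\alpha$, the other $\bar\alpha$; if $e_1(v)$ has type $\tau$ then $e_2(v)$ has the other type and $e_3(v),e_4(v)$ have type $\tau$. Leaves of type $\alpha$ are leaves, of type $\bar\alpha$ anti-leaves. A heap-ordering labels true vertices bijectively by $\{1,\dots,n\}$, increasing from parent to child. Graphs. For even $n$, a graph of order $n$ is $G=(U,w,w')$: $U$ heap-ordered; $w$ a bijection leaves $\to$ anti-leaves (dashed edges; internal edges are solid); $w'$ a partition of true vertices into $n/2$ pairs (wavy edges) with, for each pair $\{v,v'\}$ ($v$ of smaller label), one of eight propagators in $(S,j,k)=(S_v,j_v,k_v)$, $(S',j',k')=(S_{v'},j_{v'},k_{v'})$: $\delta_{jj'}\delta_{kk'}$, $\delta_{j,S-j'}\delta_{kk'}$, $\delta_{jj'}\delta_{k,S-k'}$, $\delta_{j,S-j'}\delta_{k,S-k'}$, $\delta_{jk'}\delta_{kj'}$, $\delta_{j,S-k'}\delta_{kj'}$, $\delta_{jk'}\delta_{k,S-j'}$, $\delta_{j,S-k'}\delta_{k,S-j'}$, with $S=S'$; momenta $j_v,S_v-j_v,k_v,S_v-k_v$ sit on the ends at $v$ of $e_1(v),\dots,e_4(v)$. Faces and degree. Edge-ends at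 true vertices and at the root are slots. Each propagator of $\{v,v'\}$, with $S=S'$, identifies each of $j,S-j,k,S-k$ of $v$ with a momentum of $v'$, thus pairs each slot of $v$ with a slot of $v'$ (the four corners of the wavy edge). Let $\Gamma$ be the graph on slots with edges the solid and dashed edges, the corners, and an extra edge joining the two root slots; its components (cycles) are faces, $F(G)$ their number. $E$ is the $(n/2)\times F(G)$ matrix, rows wavy edges $\omega=\{v,v'\}$ ($v$ smaller label), columns faces, $E_{\omega f}$ = #(corners of $\omega$ in $f$ containing $e_1(v)$ or $e_2(v)$) − #(corners of $\omega$ in $f$ containing $e_3(v)$ or $e_4(v)$). $R(G)=\operatorname{rank}E$ ($0$ if $n=0$), $d(G):=n-F(G)+R(G)+1$. Melonic graphs. For two true vertices joined by three edges, the leading propagator is the one whose slot pairing maps the $v$-end of each joining edge to its $v'$-end. The trivial graph ($n=0$) is the root with a leaf and an anti-leaf joined by a dashed edge. A graph is melonic if (ignoring heap-orderings) it arises from the trivial graph by repeatedly inserting two new true vertices $v,v'$, joined to each other by three edges and by a wavy edge carrying the leading propagator, in one of these ways: (I) into a dashed edge $\{x,y\}$: $e_1(v)$ at $x$, $e_1(v')$ at $y$, dashed edges $e_2(v)$–$e_2(v')$ and $\{e_3(v),e_4(v)\}$ bijectively to $\{e_3(v'),e_4(v')\}$; (II) into a dashed edge $\{z,z'\}$: $e_1(v)$ at $z$, $e_1(v')=e_2(v)$, dashed edges $e_2(v')$–$z'$ and $\{e_3(v),e_4(v)\}$ bijectively to $\{e_3(v'),e_4(v')\}$; (III) into a dashed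 edge $\{z,z'\}$: $e_1(v)$ at $z$, $e_1(v')=e_a(v)$ ($a\in\{3,4\}$, $b$ the other), dashed edges $e_2(v)$–(one of $e_3(v'),e_4(v')$), $e_b(v)$–$e_2(v')$, remaining child leaf of $v'$–$z'$; (IIs) into a solid edge from $u$ to child $z$: $v$ below $u$, $e_1(v')=e_2(v)$, $e_1(z)=e_2(v')$, dashed edges $\{e_3(v),e_4(v)\}$ bijectively to $\{e_3(v'),e_4(v')\}$; (IIIs) as (IIs) but $e_1(v')=e_a(v)$, $a\in\{3,4\}$, $e_1(z)=e_c(v')$, $c\in\{3,4\}$, dashed edges $e_2(v)$–(other of $e_3(v'),e_4(v')$) and $e_b(v)$–$e_2(v')$. *)

theory Defs
  imports Main "Jordan_Normal_Form.DL_Rank"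
begin

text \<open>A slot (edge-end) is a pair (x, i).  The root is vertex 0 with slots (0,1)
(end of the root edge of type alpha) and (0,2) (end of the root edge of type alpha-bar).
A true vertex v (v >= 1) has slots (v,1),...,(v,4): (v,i) is the end at v of e_i(v).
Types: True = alpha, False = alpha-bar.\<close>

type_synonym slot = "nat \<times> nat"

record mgraph =
  par :: "nat \<Rightarrow> slot option"   \<comment> \<open>par v = slot of the parent at which e_1(v) is attached; dom = true vertices\<close>
  dsh :: "slot \<Rightarrow> slot option"   \<comment> \<open>dashed edges, stored symmetrically; dom = leaf and anti-leaf slots\<close>
  cor :: "slot \<Rightarrow> slot option"   \<comment> \<open>corners of the wavy edges, stored symmetrically; dom = slots of true vertices\<close>

definition verts :: "mgraph \<Rightarrow> nat set" where
  "verts G = dom (par G)"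

definition true_slots :: "nat set \<Rightarrow> slot set" where
  "true_slots V = {(v, i) | v i. v \<in> V \<and> i \<in> {1..4}}"

definition all_slots :: "nat set \<Rightarrow> slot set" where
  "all_slots V = {(0,1), (0,2)} \<union> true_slots V"

definition child_slots :: "nat set \<Rightarrow> slot set" where
  "child_slots V = {(0,1), (0,2)} \<union> {(v, i) | v i. v \<in> V \<and> i \<in> {2,3,4}}"

text \<open>Type of a slot given the types tp of the true vertices (type of e_1(v)).\<close>
fun sty :: "(nat \<Rightarrow> bool) \<Rightarrow> slot \<Rightarrow> bool" where
  "sty tp (x, i) = (if x = 0 then i = 1 else if i = 2 then \<not> tp x else tp x)"

text \<open>The eight propagators, as the slot pairing they induce: slot i of v
(momenta j, S-j, k, S-k for i = 1,2,3,4) is paired with slot (prop_perm p i) of v'.\<close>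
definition prop_perm :: "nat \<Rightarrow> nat \<Rightarrow> nat" where
  "prop_perm p i = [[1,2,3,4::nat], [2,1,3,4], [1,2,4,3], [2,1,4,3],
                    [3,4,1,2], [4,3,1,2], [3,4,2,1], [4,3,2,1]] ! p ! (i - 1)"

definition mate :: "mgraph \<Rightarrow> nat \<Rightarrow> nat" where
  "mate G v = fst (the (cor G (v, 1)))"

text \<open>G is a graph of order n (heap-ordered by its vertex names 1..n).\<close>
definition is_graph :: "nat \<Rightarrow> mgraph \<Rightarrow> bool" where
  "is_graph n G \<longleftrightarrow> even n \<and> verts G = {1..n} \<and>
     (\<forall>v\<in>{1..n}. \<exists>s. par G v = Some s \<and> s \<in> child_slots {1..n} \<and> fst s < v) \<and>
     inj_on (par G) {1..n} \<and>
     (\<exists>tp. (\<forall>v\<in>{1..n}. tp v = sty tp (the (par G v))) \<and>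
        dom (dsh G) = child_slots {1..n} - ran (par G) \<and>
        (\<forall>s t. dsh G s = Some t \<longrightarrow> dsh G t = Some s \<and> sty tp s \<noteq> sty tp t)) \<and>
     dom (cor G) = true_slots {1..n} \<and>
     (\<forall>s t. cor G s = Some t \<longrightarrow> cor G t = Some s) \<and>
     (\<forall>v\<in>{1..n}. \<exists>v'\<in>{1..n}. v' \<noteq> v \<and> (\<forall>i\<in>{1..4}. fst (the (cor G (v, i))) = v') \<and>
        (v < v' \<longrightarrow> (\<exists>p<8. \<forall>i\<in>{1..4}. cor G (v, i) = Some (v', prop_perm p i))))"

definition gedges :: "mgraph \<Rightarrow> (slot \<times> slot) set" where
  "gedges G = {((v,1), s) | v s. par G v = Some s}
            \<union> {(s, t). dsh G s = Some t} \<union> {(s, t). cor G s = Some t}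
            \<union> {((0,1), (0,2))}"

definition gadj :: "mgraph \<Rightarrow> (slot \<times> slot) set" where
  "gadj G = gedges G \<union> (gedges G)\<inverse>"

definition faces :: "mgraph \<Rightarrow> slot set set" where
  "faces G = all_slots (verts G) // ((gadj G)\<^sup>*)"

definition nfaces :: "mgraph \<Rightarrow> nat" where
  "nfaces G = card (faces G)"

definition wavy :: "mgraph \<Rightarrow> nat set" where
  "wavy G = {v \<in> verts G. v < mate G v}"

definition Emat :: "mgraph \<Rightarrow> real mat" where
  "Emat G = (let rs = sorted_list_of_set (wavy G);
                 fs = (SOME fs. distinct fs \<and> set fs = faces G)
             in mat (length rs) (length fs)
                  (\<lambda>(r, c). real (card {i\<in>{1,2::nat}. (rs ! r, i) \<in> fs ! c})
                          - real (card {i\<in>{3,4::nat}. (rs ! r, i) \<in> fs ! c})))"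

definition rankE :: "mgraph \<Rightarrow> nat" where
  "rankE G = (if verts G = {} then 0 else vec_space.rank (dim_row (Emat G)) (Emat G))"

definition degree :: "mgraph \<Rightarrow> int" where
  "degree G = int (card (verts G)) - int (nfaces G) + int (rankE G) + 1"

definition trivial_graph :: mgraph where
  "trivial_graph = \<lparr>par = Map.empty, dsh = [(0,1) \<mapsto> (0,2), (0,2) \<mapsto> (0,1)], cor = Map.empty\<rparr>"

definition set_prop :: "(slot \<Rightarrow> slot option) \<Rightarrow> nat \<Rightarrow> nat \<Rightarrow> nat \<Rightarrow> slot \<Rightarrow> slot option" where
  "set_prop c v v' p s =
     (if fst s = v \<and> snd s \<in> {1..4} then Some (v', prop_perm p (snd s))
      else if fst s = v' \<and> snd s \<in> {1..4}
        then Some (v, THE i. i \<in> {1..4} \<and> prop_perm p i = snd s)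
      else c s)"

definition add_dash :: "(slot \<Rightarrow> slot option) \<Rightarrow> slot \<Rightarrow> slot \<Rightarrow> slot \<Rightarrow> slot option" where
  "add_dash d s t = d(s \<mapsto> t, t \<mapsto> s)"

definition del_dash :: "(slot \<Rightarrow> slot option) \<Rightarrow> slot \<Rightarrow> slot \<Rightarrow> slot \<Rightarrow> slot option" where
  "del_dash d s t = d(s := None, t := None)"

inductive melonic :: "mgraph \<Rightarrow> bool" where
  triv: "melonic trivial_graph"
| insI: "\<lbrakk>melonic G; dsh G x = Some y; v \<notin> verts G; v' \<notin> verts G; v \<noteq> v'; v \<noteq> 0; v' \<noteq> 0;
          b \<in> {3,4}; p < 8;
          prop_perm p 2 = 2; prop_perm p 3 = b; prop_perm p 4 = 7 - b\<rbrakk> \<Longrightarrow>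
     melonic \<lparr>par = (par G)(v \<mapsto> x, v' \<mapsto> y),
              dsh = add_dash (add_dash (add_dash (del_dash (dsh G) x y)
                       (v,2) (v',2)) (v,3) (v',b)) (v,4) (v',7-b),
              cor = set_prop (cor G) v v' p\<rparr>"
| insII: "\<lbrakk>melonic G; dsh G z = Some z'; v \<notin> verts G; v' \<notin> verts G; v \<noteq> v'; v \<noteq> 0; v' \<noteq> 0;
          b \<in> {3,4}; p < 8;
          prop_perm p 2 = 1; prop_perm p 3 = b; prop_perm p 4 = 7 - b\<rbrakk> \<Longrightarrow>
     melonic \<lparr>par = (par G)(v \<mapsto> z, v' \<mapsto> (v,2)),
              dsh = add_dash (add_dash (add_dash (del_dash (dsh G) z z')
                       (v',2) z') (v,3) (v',b)) (v,4) (v',7-b),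
              cor = set_prop (cor G) v v' p\<rparr>"
| insIII: "\<lbrakk>melonic G; dsh G z = Some z'; v \<notin> verts G; v' \<notin> verts G; v \<noteq> v'; v \<noteq> 0; v' \<noteq> 0;
          a \<in> {3,4}; c \<in> {3,4}; p < 8;
          prop_perm p a = 1; prop_perm p 2 = c; prop_perm p (7 - a) = 2\<rbrakk> \<Longrightarrow>
     melonic \<lparr>par = (par G)(v \<mapsto> z, v' \<mapsto> (v,a)),
              dsh = add_dash (add_dash (add_dash (del_dash (dsh G) z z')
                       (v,2) (v',c)) (v,7-a) (v',2)) (v',7-c) z',
              cor = set_prop (cor G) v v' p\<rparr>"
| insIIs: "\<lbrakk>melonic G; par G z = Some s; v \<notin> verts G; v' \<notin> verts G; v \<noteq> v'; v \<noteq> 0; v' \<noteq> 0;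
          b \<in> {3,4}; p < 8;
          prop_perm p 2 = 1; prop_perm p 3 = b; prop_perm p 4 = 7 - b\<rbrakk> \<Longrightarrow>
     melonic \<lparr>par = (par G)(v \<mapsto> s, v' \<mapsto> (v,2), z \<mapsto> (v',2)),
              dsh = add_dash (add_dash (dsh G) (v,3) (v',b)) (v,4) (v',7-b),
              cor = set_prop (cor G) v v' p\<rparr>"
| insIIIs: "\<lbrakk>melonic G; par G z = Some s; v \<notin> verts G; v' \<notin> verts G; v \<noteq> v'; v \<noteq> 0; v' \<noteq> 0;
          a \<in> {3,4}; c \<in> {3,4}; p < 8;
          prop_perm p a = 1; prop_perm p 2 = 7 - c; prop_perm p (7 - a) = 2\<rbrakk> \<Longrightarrow>
     melonic \<lparr>par = (par G)(v \<mapsto> s, v' \<mapsto> (v,a), z \<mapsto> (v',c)),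
              dsh = add_dash (add_dash (dsh G) (v,2) (v',7-c)) (v,7-a) (v',2),
              cor = set_prop (cor G) v v' p\<rparr>"

end

theory Submission
  imports Defs
begin


lemma surgery:
  fixes S :: "'a set" and R R' P :: "('a \<times> 'a) set"
  assumes RS: "R \<subseteq> S \<times> S"
    and Rsym: "\<And>p q. (p,q) \<in> R \<Longrightarrow> (q,p) \<in> R"
    and R'sym: "\<And>p q. (p,q) \<in> R' \<Longrightarrow> (q,p) \<in> R'"
    and xS: "x \<in> S" and yS: "y \<in> S" and xy: "(x,y) \<in> R"
    and nS: "a \<notin> S" "b \<notin> S" "c1 \<notin> S" "d1 \<notin> S" "c2 \<notin> S" "d2 \<notin> S" "c3 \<notin> S" "d3 \<notin> S"
    and dist: "distinct [a,b,c1,d1,c2,d2,c3,d3]"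
    and P_def: "P = {(x,a),(a,b),(b,y),(c1,d1),(c2,d2),(c3,d3)}"
    and h1: "R' \<subseteq> R \<union> P \<union> P\<inverse>"
    and h2: "R - {(x,y),(y,x)} \<subseteq> R'"
    and h3: "P \<subseteq> R'"
  shows "(S \<union> {a,b,c1,d1,c2,d2,c3,d3}) // R'\<^sup>* =
         (S // R\<^sup>* - {R\<^sup>*``{x}}) \<union> {R\<^sup>*``{x} \<union> {a,b}, {c1,d1}, {c2,d2}, {c3,d3}}"
proof -
  have Rs: "R\<^sup>* \<subseteq> R'\<^sup>*"
  proof -
    have "R \<subseteq> R'\<^sup>*"
    proof
      fix e assume e: "e \<in> R"
      obtain p q where pq: "e = (p,q)" by (cases e)
      show "e \<in> R'\<^sup>*"
      proof (cases "e \<in> {(x,y),(y,x)}")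
        case True
        have 1: "(x,a) \<in> R'" "(a,b) \<in> R'" "(b,y) \<in> R'" using h3 P_def by auto
        then have 2: "(y,b) \<in> R'" "(b,a) \<in> R'" "(a,x) \<in> R'" using R'sym by auto
        have "(x,y) \<in> R'\<^sup>*" using 1 by (meson rtrancl.rtrancl_into_rtrancl r_into_rtrancl)
        moreover have "(y,x) \<in> R'\<^sup>*" using 2 by (meson rtrancl.rtrancl_into_rtrancl r_into_rtrancl)
        ultimately show ?thesis using True by auto
      next
        case False
        then show ?thesis using h2 e by auto
      qed
    qed
    then show ?thesis by (metis rtrancl_subset_rtrancl)
  qed
  have Rstarsym: "(p,q) \<in> R\<^sup>* \<Longrightarrow> (q,p) \<in> R\<^sup>*" for p q
  proof -
    have "R\<inverse> = R" using Rsym by auto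
    moreover assume "(p,q) \<in> R\<^sup>*"
    ultimately show ?thesis by (metis rtrancl_converseI)
  qed
  have R'starsym: "(p,q) \<in> R'\<^sup>* \<Longrightarrow> (q,p) \<in> R'\<^sup>*" for p q
  proof -
    have "R'\<inverse> = R'" using R'sym by auto
    moreover assume "(p,q) \<in> R'\<^sup>*"
    ultimately show ?thesis by (metis rtrancl_converseI)
  qed
  define \<pi> where "\<pi> u = (if u = a \<or> u = b then x else u)" for u
  have L2: "(s,t) \<in> R'\<^sup>* \<Longrightarrow> s \<in> S \<union> {a,b} \<Longrightarrow> t \<in> S \<union> {a,b} \<and> (\<pi> s, \<pi> t) \<in> R\<^sup>*" for s t
  proof (induction rule: rtrancl_induct)
    case base
    then show ?case by auto
  next
    case (step t u)
    then have t: "t \<in> S \<union> {a,b}" and st: "(\<pi> s, \<pi> t) \<in> R\<^sup>*" by auto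
    have tu: "(t,u) \<in> R \<union> P \<union> P\<inverse>" using step h1 by auto
    have "u \<in> S \<union> {a,b} \<and> (\<pi> t, \<pi> u) \<in> R\<^sup>*"
    proof -
      { assume "(t,u) \<in> R"
        then have "t \<in> S" "u \<in> S" using RS by auto
        then have "\<pi> t = t" "\<pi> u = u" using nS unfolding \<pi>_def by auto
        then have ?thesis using \<open>(t,u) \<in> R\<close> \<open>u \<in> S\<close> by auto }
      moreover
      { assume "(t,u) \<in> P \<union> P\<inverse>"
        then have ?thesis using t dist nS xS yS xy Rsym[OF xy] unfolding P_def \<pi>_def by auto }
      ultimately show ?thesis using tu by blast
    qed
    then show ?case using st by (meson rtrancl_trans)
  qed
  have L3: "(s,t) \<in> R'\<^sup>* \<Longrightarrow> s \<in> {c,d} \<Longrightarrow> (c,d) \<in> {(c1,d1),(c2,d2),(c3,d3)} \<Longrightarrow> t \<in> {c,d}" for s t c d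
  proof (induction rule: rtrancl_induct)
    case (step t u)
    then have "(t,u) \<in> R \<union> P \<union> P\<inverse>" using h1 by auto
    then show ?case using step RS nS dist xS yS unfolding P_def by auto
  qed auto
  have RsS: "(s,t) \<in> R\<^sup>* \<Longrightarrow> s \<in> S \<Longrightarrow> t \<in> S" for s t
    by (induction rule: rtrancl_induct) (use RS in auto)
  let ?X = "R\<^sup>*``{x}"
  have clsS: "R'\<^sup>*``{s} = R\<^sup>*``{s} \<union> (if (x,s) \<in> R\<^sup>* then {a,b} else {})" if s: "s \<in> S" for s
  proof
    show "R'\<^sup>*``{s} \<subseteq> R\<^sup>*``{s} \<union> (if (x,s) \<in> R\<^sup>* then {a,b} else {})"
    proof
      fix t assume "t \<in> R'\<^sup>*``{s}"
      then have st: "(s,t) \<in> R'\<^sup>*" by auto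
      from L2[OF st] s have t: "t \<in> S \<union> {a,b}" and r: "(\<pi> s, \<pi> t) \<in> R\<^sup>*" by auto
      have ps: "\<pi> s = s" using s nS unfolding \<pi>_def by auto
      show "t \<in> R\<^sup>*``{s} \<union> (if (x,s) \<in> R\<^sup>* then {a,b} else {})"
      proof (cases "t = a \<or> t = b")
        case True
        then have "(s,x) \<in> R\<^sup>*" using r ps unfolding \<pi>_def by auto
        then show ?thesis using True Rstarsym by auto
      next
        case False
        then show ?thesis using r ps unfolding \<pi>_def by auto
      qed
    qed
  next
    show "R\<^sup>*``{s} \<union> (if (x,s) \<in> R\<^sup>* then {a,b} else {}) \<subseteq> R'\<^sup>*``{s}"
    proof -
      have "R\<^sup>*``{s} \<subseteq> R'\<^sup>*``{s}" using Rs by auto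
      moreover have "{a,b} \<subseteq> R'\<^sup>*``{s}" if "(x,s) \<in> R\<^sup>*"
      proof -
        have "(s,x) \<in> R'\<^sup>*" using Rs Rstarsym[OF that] by auto
        moreover have "(x,a) \<in> R'" "(a,b) \<in> R'" using h3 P_def by auto
        ultimately have "(s,a) \<in> R'\<^sup>*" "(s,b) \<in> R'\<^sup>*"
          by (meson rtrancl.rtrancl_into_rtrancl)+
        then show ?thesis by auto
      qed
      ultimately show ?thesis by auto
    qed
  qed
  have xa: "(x,a) \<in> R'\<^sup>*" "(x,b) \<in> R'\<^sup>*" using h3 P_def
    by (auto intro: rtrancl.rtrancl_into_rtrancl)
  have eqcl: "(p,q) \<in> R'\<^sup>* \<Longrightarrow> R'\<^sup>*``{q} = R'\<^sup>*``{p}" for p q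
    using R'starsym by (auto intro: rtrancl_trans)
  have clsa: "R'\<^sup>*``{a} = ?X \<union> {a,b}" "R'\<^sup>*``{b} = ?X \<union> {a,b}"
    using eqcl[OF xa(1)] eqcl[OF xa(2)] clsS[OF xS] by auto
  have cc: "(c1,d1) \<in> R'" "(c2,d2) \<in> R'" "(c3,d3) \<in> R'" using h3 P_def by auto
  have clsc: "R'\<^sup>*``{c1} = {c1,d1}" "R'\<^sup>*``{d1} = {c1,d1}"
     "R'\<^sup>*``{c2} = {c2,d2}" "R'\<^sup>*``{d2} = {c2,d2}"
     "R'\<^sup>*``{c3} = {c3,d3}" "R'\<^sup>*``{d3} = {c3,d3}"
  proof -
    have g: "R'\<^sup>*``{c} = {c,d} \<and> R'\<^sup>*``{d} = {c,d}" if cd: "(c,d) \<in> {(c1,d1),(c2,d2),(c3,d3)}" for c d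
    proof -
      have "(c,d) \<in> R'" using cd cc by auto
      then have "(d,c) \<in> R'" using R'sym by auto
      have "R'\<^sup>*``{c} \<subseteq> {c,d}" "R'\<^sup>*``{d} \<subseteq> {c,d}" using L3[OF _ _ cd] by auto
      moreover have "{c,d} \<subseteq> R'\<^sup>*``{c}" "{c,d} \<subseteq> R'\<^sup>*``{d}"
        using \<open>(c,d) \<in> R'\<close> \<open>(d,c) \<in> R'\<close> by auto
      ultimately show ?thesis by blast
    qed
    show "R'\<^sup>*``{c1} = {c1,d1}" "R'\<^sup>*``{d1} = {c1,d1}" using g[of c1 d1] by auto
    show "R'\<^sup>*``{c2} = {c2,d2}" "R'\<^sup>*``{d2} = {c2,d2}" using g[of c2 d2] by auto
    show "R'\<^sup>*``{c3} = {c3,d3}" "R'\<^sup>*``{d3} = {c3,d3}" using g[of c3 d3] by auto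
  qed
  have oldcl: "R\<^sup>*``{s} = ?X \<longleftrightarrow> (x,s) \<in> R\<^sup>*" if "s \<in> S" for s
    using Rstarsym by (auto intro: rtrancl_trans)
  have Q1: "(\<lambda>s. R'\<^sup>*``{s}) ` S = (S // R\<^sup>* - {?X}) \<union> {?X \<union> {a,b}}"
  proof
    show "(\<lambda>s. R'\<^sup>*``{s}) ` S \<subseteq> (S // R\<^sup>* - {?X}) \<union> {?X \<union> {a,b}}"
    proof
      fix C assume "C \<in> (\<lambda>s. R'\<^sup>*``{s}) ` S"
      then obtain s where s: "s \<in> S" "C = R'\<^sup>*``{s}" by auto
      show "C \<in> (S // R\<^sup>* - {?X}) \<union> {?X \<union> {a,b}}"
      proof (cases "(x,s) \<in> R\<^sup>*")
        case True
        then show ?thesis using s clsS[OF s(1)] oldcl[OF s(1)] by auto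
      next
        case False
        then show ?thesis using s clsS[OF s(1)] oldcl[OF s(1)] by (auto simp: quotient_def)
      qed
    qed
  next
    show "(S // R\<^sup>* - {?X}) \<union> {?X \<union> {a,b}} \<subseteq> (\<lambda>s. R'\<^sup>*``{s}) ` S"
    proof
      fix C assume C: "C \<in> (S // R\<^sup>* - {?X}) \<union> {?X \<union> {a,b}}"
      show "C \<in> (\<lambda>s. R'\<^sup>*``{s}) ` S"
      proof (cases "C = ?X \<union> {a,b}")
        case True
        then show ?thesis using clsS[OF xS] xS by auto
      next
        case False
        then obtain s where s: "s \<in> S" "C = R\<^sup>*``{s}" "C \<noteq> ?X" using C by (auto simp: quotient_def)
        then have "(x,s) \<notin> R\<^sup>*" using oldcl by auto
        then show ?thesis using s clsS[OF s(1)] by auto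
      qed
    qed
  qed
  have "(S \<union> {a,b,c1,d1,c2,d2,c3,d3}) // R'\<^sup>* = (\<lambda>s. R'\<^sup>*``{s}) ` S \<union> (\<lambda>s. R'\<^sup>*``{s}) ` {a,b,c1,d1,c2,d2,c3,d3}"
    by (auto simp: quotient_def)
  also have "(\<lambda>s. R'\<^sup>*``{s}) ` {a,b,c1,d1,c2,d2,c3,d3} = {?X \<union> {a,b}, {c1,d1}, {c2,d2}, {c3,d3}}"
    using clsa clsc by auto
  finally show ?thesis using Q1 by auto
qed




definition colf :: "slot set \<Rightarrow> nat \<Rightarrow> real" where
  "colf f w = real (card {i\<in>{1,2::nat}. (w,i) \<in> f}) - real (card {i\<in>{3,4::nat}. (w,i) \<in> f})"

definition spanP :: "slot set set \<Rightarrow> nat set \<Rightarrow> bool" where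
  "spanP Q W \<longleftrightarrow> (\<forall>w\<in>W. \<exists>c. \<forall>u\<in>W. (\<Sum>f\<in>Q. c f * colf f u) = (if u = w then 1 else 0))"

lemma sum_step:
  fixes g :: "'a set \<Rightarrow> 'b::comm_monoid_add"
  assumes fin: "finite Q" and XQ: "X \<in> Q" and sub: "\<forall>f\<in>Q. f \<subseteq> S"
    and nS: "a \<notin> S" "c1 \<notin> S" "c2 \<notin> S" "c3 \<notin> S"
    and dist: "distinct [a,b,c1,d1,c2,d2,c3,d3]"
  shows "sum g ((Q - {X}) \<union> {X \<union> {a,b}, {c1,d1}, {c2,d2}, {c3,d3}}) =
         sum g (Q - {X}) + (g (X \<union> {a,b}) + (g {c1,d1} + (g {c2,d2} + g {c3,d3})))"
proof -
  let ?N = "{X \<union> {a,b}, {c1,d1}, {c2,d2}, {c3,d3}}"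
  have disj: "(Q - {X}) \<inter> ?N = {}" using sub nS by auto
  have "sum g ((Q - {X}) \<union> ?N) = sum g (Q - {X}) + sum g ?N"
    using fin disj by (intro sum.union_disjoint) auto
  moreover have "sum g ?N = g (X \<union> {a,b}) + (g {c1,d1} + (g {c2,d2} + g {c3,d3}))"
  proof -
    have n1: "X \<union> {a,b} \<notin> {{c1,d1},{c2,d2},{c3,d3}}" using dist by auto
    have n2: "{c1,d1} \<notin> {{c2,d2},{c3,d3}}" using dist by auto
    have n3: "{c2,d2} \<notin> {{c3,d3}}" using dist by auto
    show ?thesis using n1 n2 n3 by simp
  qed
  ultimately show ?thesis by simp
qed

lemma card_step:
  assumes fin: "finite Q" and XQ: "X \<in> Q" and sub: "\<forall>f\<in>Q. f \<subseteq> S"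
    and nS: "a \<notin> S" "c1 \<notin> S" "c2 \<notin> S" "c3 \<notin> S"
    and dist: "distinct [a,b,c1,d1,c2,d2,c3,d3]"
  shows "card ((Q - {X}) \<union> {X \<union> {a,b}, {c1,d1}, {c2,d2}, {c3,d3}}) = card Q + 3"
proof -
  have "card ((Q - {X}) \<union> {X \<union> {a,b}, {c1,d1}, {c2,d2}, {c3,d3}}) =
    (\<Sum>f\<in>(Q - {X}) \<union> {X \<union> {a,b}, {c1,d1}, {c2,d2}, {c3,d3}}. 1)" by simp
  also have "\<dots> = card (Q - {X}) + 4"
    using sum_step[OF assms, of "\<lambda>_. 1::nat"] by simp
  also have "\<dots> = card Q + 3"
  proof -
    have "card Q > 0" using fin XQ card_gt_0_iff by blast
    then show ?thesis using XQ by (simp add: card_Diff_singleton)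
  qed
  finally show ?thesis .
qed

lemma span_step:
  assumes sp: "spanP Q W" and fin: "finite Q" and XQ: "X \<in> Q" and sub: "\<forall>f\<in>Q. f \<subseteq> S"
    and nS: "a \<notin> S" "c1 \<notin> S" "c2 \<notin> S" "c3 \<notin> S"
    and dist: "distinct [a,b,c1,d1,c2,d2,c3,d3]"
    and nW: "fst a \<notin> W" "fst b \<notin> W" "fst c1 \<notin> W" "fst d1 \<notin> W" "fst c2 \<notin> W" "fst d2 \<notin> W"
       "fst c3 \<notin> W" "fst d3 \<notin> W" "vn \<notin> W"
    and s1: "colf {c1,d1} vn = 1 \<or> colf {c1,d1} vn = -1"
  shows "spanP ((Q - {X}) \<union> {X \<union> {a,b}, {c1,d1}, {c2,d2}, {c3,d3}}) (insert vn W)"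
proof -
  let ?Q' = "(Q - {X}) \<union> {X \<union> {a,b}, {c1,d1}, {c2,d2}, {c3,d3}}"
  let ?Y = "X \<union> {a,b}"
  have SS: "sum g ?Q' = sum g (Q - {X}) + (g ?Y + (g {c1,d1} + (g {c2,d2} + g {c3,d3})))" for g :: "slot set \<Rightarrow> real"
    by (rule sum_step[OF fin XQ sub nS dist])
  have SQ: "sum g Q = sum g (Q - {X}) + g X" for g :: "slot set \<Rightarrow> real"
    using fin XQ by (simp add: sum.remove add.commute)
  have cY: "colf ?Y u = colf X u" if "u \<in> W" for u
  proof -
    have "(u,i) \<notin> {a,b}" for i using that nW by (cases a, cases b) auto
    then show ?thesis unfolding colf_def by auto
  qed
  have c0: "colf {c,d} u = 0" if "u \<in> W" "fst c \<notin> W" "fst d \<notin> W" for u c d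
  proof -
    have "(u,i) \<notin> {c,d}" for i using that by (cases c, cases d) auto
    then show ?thesis unfolding colf_def by auto
  qed
  have cc: "colf {c1,d1} u = 0" "colf {c2,d2} u = 0" "colf {c3,d3} u = 0" if "u \<in> W" for u
    using c0[OF that] nW by auto
  define s where "s = colf {c1,d1} vn"
  have ss: "s * s = 1" using s1 unfolding s_def by auto
  have dd: "{c1,d1} \<noteq> ?Y" "{c2,d2} \<noteq> ?Y" "{c3,d3} \<noteq> ?Y" "{c2,d2} \<noteq> {c1,d1}" "{c3,d3} \<noteq> {c1,d1}"
    "{c3,d3} \<noteq> {c2,d2}" using dist by auto
  have YQ: "?Y \<notin> Q - {X}" "{c1,d1} \<notin> Q - {X}" "{c2,d2} \<notin> Q - {X}" "{c3,d3} \<notin> Q - {X}"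
    using sub nS by auto
  show ?thesis unfolding spanP_def
  proof
    fix w assume w: "w \<in> insert vn W"
    show "\<exists>c. \<forall>u\<in>insert vn W. (\<Sum>f\<in>?Q'. c f * colf f u) = (if u = w then 1 else 0)"
    proof (cases "w = vn")
      case True
      define c' where "c' f = (if f = {c1,d1} then s else 0)" for f
      have "(\<Sum>f\<in>?Q'. c' f * colf f u) = (if u = w then 1 else 0)" if u: "u \<in> insert vn W" for u
      proof -
        have z: "(\<Sum>f\<in>Q - {X}. c' f * colf f u) = 0"
          using YQ by (intro sum.neutral) (auto simp: c'_def)
        have "(\<Sum>f\<in>?Q'. c' f * colf f u) = s * colf {c1,d1} u"
          unfolding SS z using dd by (simp add: c'_def)
        then show ?thesis using u True cc ss nW unfolding s_def by auto
      qed
      then show ?thesis by blast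
    next
      case False
      then have wW: "w \<in> W" using w by auto
      obtain c where c: "\<And>u. u \<in> W \<Longrightarrow> (\<Sum>f\<in>Q. c f * colf f u) = (if u = w then 1 else 0)"
        using sp wW unfolding spanP_def by blast
      define t where "t = (\<Sum>f\<in>Q - {X}. c f * colf f vn) + c X * colf ?Y vn"
      define c' where "c' f = (if f = {c1,d1} then - t * s else if f = ?Y then c X
          else if f = {c2,d2} \<or> f = {c3,d3} then 0 else c f)" for f
      have "(\<Sum>f\<in>?Q'. c' f * colf f u) = (if u = w then 1 else 0)" if u: "u \<in> insert vn W" for u
      proof -
        have e1: "(\<Sum>f\<in>Q - {X}. c' f * colf f u) = (\<Sum>f\<in>Q - {X}. c f * colf f u)"
        proof (rule sum.cong)
          fix f assume f: "f \<in> Q - {X}"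
          have "f \<noteq> {c1,d1}" "f \<noteq> ?Y" "f \<noteq> {c2,d2}" "f \<noteq> {c3,d3}" using f YQ by metis+
          then show "c' f * colf f u = c f * colf f u" unfolding c'_def by simp
        qed simp
        have E: "(\<Sum>f\<in>?Q'. c' f * colf f u) = (\<Sum>f\<in>Q - {X}. c f * colf f u) + c X * colf ?Y u
            - t * s * colf {c1,d1} u"
          unfolding SS e1 using dd by (simp add: c'_def)
        show ?thesis
        proof (cases "u = vn")
          case True
          have "t * s * colf {c1,d1} u = t" using True ss unfolding s_def by (simp add: mult.assoc)
          then have "(\<Sum>f\<in>?Q'. c' f * colf f u) = 0" unfolding E t_def using True by simp
          then show ?thesis using True False by simp
        next
          case F: False
          then have uW: "u \<in> W" using u by auto
          have "(\<Sum>f\<in>?Q'. c' f * colf f u) = (\<Sum>f\<in>Q - {X}. c f * colf f u) + c X * colf X u"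
            unfolding E cc[OF uW] cY[OF uW] by simp
          also have "\<dots> = (\<Sum>f\<in>Q. c f * colf f u)" using SQ[of "\<lambda>f. c f * colf f u"] by simp
          also have "\<dots> = (if u = w then 1 else 0)" using c[OF uW] .
          finally show ?thesis .
        qed
      qed
      then show ?thesis by blast
    qed
  qed
qed




definition minv :: "mgraph \<Rightarrow> bool" where
  "minv G \<longleftrightarrow> finite (verts G) \<and> 0 \<notin> verts G \<and>
    (\<forall>w s. par G w = Some s \<longrightarrow> s \<in> all_slots (verts G)) \<and>
    (\<forall>s t. dsh G s = Some t \<longrightarrow> s \<in> all_slots (verts G) \<and> t \<in> all_slots (verts G) \<and> dsh G t = Some s) \<and>
    (\<forall>s t. cor G s = Some t \<longrightarrow> s \<in> true_slots (verts G) \<and> t \<in> true_slots (verts G)) \<and>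
    (\<exists>k. card (verts G) = 2*k \<and> card (faces G) = 1 + 3*k \<and> card (wavy G) = k) \<and>
    spanP (faces G) (wavy G)"

lemma colf_pair:
  assumes "v \<noteq> v'" "i \<in> {1..4}"
  shows "colf {(v,i),(v',j)} v = 1 \<or> colf {(v,i),(v',j)} v = -1"
proof -
  have e1: "{k\<in>{1,2::nat}. (v,k) \<in> {(v,i),(v',j)}} = (if i \<in> {1,2} then {i} else {})" using assms by auto
  have e2: "{k\<in>{3,4::nat}. (v,k) \<in> {(v,i),(v',j)}} = (if i \<in> {3,4} then {i} else {})" using assms by auto
  have "i = 1 \<or> i = 2 \<or> i = 3 \<or> i = 4" using assms by auto
  then show ?thesis unfolding colf_def e1 e2 by auto
qed

lemma gadj_sym: "(p,q) \<in> gadj G \<Longrightarrow> (q,p) \<in> gadj G"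
  unfolding gadj_def by auto

lemma gadj_sub:
  assumes "minv G"
  shows "gadj G \<subseteq> all_slots (verts G) \<times> all_slots (verts G)"
proof -
  have "gedges G \<subseteq> all_slots (verts G) \<times> all_slots (verts G)"
  proof
    fix e assume "e \<in> gedges G"
    then obtain p q where e: "e = (p,q)" and pq: "(p,q) \<in> gedges G" by (cases e) auto
    have ts: "true_slots (verts G) \<subseteq> all_slots (verts G)" unfolding all_slots_def by auto
    from pq consider (par) w where "p = (w,1)" "par G w = Some q" | (dsh) "dsh G p = Some q"
      | (cor) "cor G p = Some q" | (root) "p = (0,1)" "q = (0,2)" unfolding gedges_def by auto
    then show "e \<in> all_slots (verts G) \<times> all_slots (verts G)"
    proof cases
      case par
      then have "w \<in> verts G" unfolding verts_def by auto
      then have "p \<in> true_slots (verts G)" using par unfolding true_slots_def by auto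
      moreover have "q \<in> all_slots (verts G)" using par assms unfolding minv_def by blast
      ultimately show ?thesis using e ts by auto
    next
      case dsh
      then show ?thesis using assms e unfolding minv_def by blast
    next
      case cor
      then show ?thesis using assms e ts unfolding minv_def by blast
    next
      case root
      then show ?thesis using e unfolding all_slots_def by auto
    qed
  qed
  then show ?thesis unfolding gadj_def by auto
qed

lemma fin_quot: "finite A \<Longrightarrow> finite (A // r)"
  unfolding quotient_def by auto

lemma all_slots_fin: "finite V \<Longrightarrow> finite (all_slots V)"
proof -
  assume "finite V"
  then have "finite (V \<times> {1..4::nat})" by auto
  moreover have "true_slots V = V \<times> {1..4}" unfolding true_slots_def by auto
  ultimately show ?thesis unfolding all_slots_def by auto
qed

lemma quot_sub:
  assumes "R \<subseteq> S \<times> S" "C \<in> S // R\<^sup>*"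
  shows "C \<subseteq> S"
proof -
  have "(s,t) \<in> R\<^sup>* \<Longrightarrow> s \<in> S \<Longrightarrow> t \<in> S" for s t
    by (induction rule: rtrancl_induct) (use assms(1) in auto)
  then show ?thesis using assms(2) unfolding quotient_def by auto
qed

lemma pair_rtrancl:
  shows "{(p,q),(q,p)}\<^sup>*``{p} = {p,q}" and "{(p,q),(q,p)}\<^sup>*``{q} = {p,q}"
proof -
  have h: "(s,t) \<in> {(p,q),(q,p)}\<^sup>* \<Longrightarrow> s \<in> {p,q} \<Longrightarrow> t \<in> {p,q}" for s t
    by (induction rule: rtrancl_induct) auto
  have "(p,q) \<in> {(p,q),(q,p)}\<^sup>*" "(q,p) \<in> {(p,q),(q,p)}\<^sup>*" by auto
  then show "{(p,q),(q,p)}\<^sup>*``{p} = {p,q}" "{(p,q),(q,p)}\<^sup>*``{q} = {p,q}" using h by auto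
qed

lemma minv_triv: "minv trivial_graph"
proof -
  have v: "verts trivial_graph = {}" unfolding verts_def trivial_graph_def by simp
  have w: "wavy trivial_graph = {}" unfolding wavy_def v by simp
  have "faces trivial_graph = {{(0,1),(0,2)}}"
  proof -
    have "gadj trivial_graph = {((0,1),(0,2)),((0,2),(0,1))}"
      unfolding gadj_def gedges_def trivial_graph_def by (auto simp: fun_upd_def split: if_splits)
    moreover have "{((0::nat,1::nat),(0::nat,2::nat)),((0,2),(0,1))}\<^sup>* ``{(0,1)} = {(0,1),(0,2)}"
      by (rule pair_rtrancl)
    moreover have "{((0::nat,1::nat),(0::nat,2::nat)),((0,2),(0,1))}\<^sup>* ``{(0,2)} = {(0,1),(0,2)}"
      by (rule pair_rtrancl)
    ultimately show ?thesis unfolding faces_def v all_slots_def true_slots_def quotient_def by auto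
  qed
  then show ?thesis unfolding minv_def v w spanP_def
    by (auto simp: trivial_graph_def all_slots_def true_slots_def)
qed


lemma gen_step:
  assumes mi: "minv G"
    and vG': "verts G' = verts G \<union> {v,v'}" and nv: "v \<notin> verts G" "v' \<notin> verts G" "v \<noteq> v'" "v \<noteq> 0" "v' \<noteq> 0"
    and wf2: "\<forall>w s. par G' w = Some s \<longrightarrow> s \<in> all_slots (verts G')"
    and wf3: "\<forall>s t. dsh G' s = Some t \<longrightarrow> s \<in> all_slots (verts G') \<and> t \<in> all_slots (verts G') \<and> dsh G' t = Some s"
    and wf4: "\<forall>s t. cor G' s = Some t \<longrightarrow> s \<in> true_slots (verts G') \<and> t \<in> true_slots (verts G')"
    and xS: "x \<in> all_slots (verts G)" and yS: "y \<in> all_slots (verts G)" and xy: "(x,y) \<in> gadj G"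
    and N: "{a,b,c1,d1,c2,d2,c3,d3} = {(v,1),(v,2),(v,3),(v,4),(v',1),(v',2),(v',3),(v',4)}"
    and dist: "distinct [a,b,c1,d1,c2,d2,c3,d3]"
    and C1: "c1 = (v,i1)" "d1 = (v',j1)" "i1 \<in> {1..4}" "j1 \<in> {1..4}"
    and P_def: "P = {(x,a),(a,b),(b,y),(c1,d1),(c2,d2),(c3,d3)}"
    and h1: "gedges G' \<subseteq> gadj G \<union> P \<union> P\<inverse>"
    and h2: "gedges G - {(x,y),(y,x)} \<subseteq> gadj G'"
    and h3: "P \<subseteq> gadj G'"
    and m1: "mate G' v = v'" "mate G' v' = v" and m3: "\<forall>w\<in>verts G. mate G' w = mate G w"
  shows "minv G'"
proof -
  let ?S = "all_slots (verts G)"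
  let ?N = "{(v,1),(v,2),(v,3),(v,4),(v',1),(v',2),(v',3),(v',4)} :: slot set"
  have finV: "finite (verts G)" and zV: "0 \<notin> verts G" using mi unfolding minv_def by auto
  have NS: "s \<notin> ?S" if "s \<in> ?N" for s
    using that nv unfolding all_slots_def true_slots_def by auto
  have nS: "a \<notin> ?S" "b \<notin> ?S" "c1 \<notin> ?S" "d1 \<notin> ?S" "c2 \<notin> ?S" "d2 \<notin> ?S" "c3 \<notin> ?S" "d3 \<notin> ?S"
  proof -
    have "{a,b,c1,d1,c2,d2,c3,d3} \<subseteq> ?N" using N by (rule equalityD1)
    then have "a \<in> ?N \<and> b \<in> ?N \<and> c1 \<in> ?N \<and> d1 \<in> ?N \<and> c2 \<in> ?N \<and> d2 \<in> ?N \<and> c3 \<in> ?N \<and> d3 \<in> ?N"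
      by (simp only: insert_subset empty_subsetI)
    then show "a \<notin> ?S" "b \<notin> ?S" "c1 \<notin> ?S" "d1 \<notin> ?S" "c2 \<notin> ?S" "d2 \<notin> ?S" "c3 \<notin> ?S" "d3 \<notin> ?S"
      using NS by metis+
  qed
  have fstN: "fst s \<in> {v,v'}" if "s \<in> ?N" for s using that by auto
  have fN: "fst a \<in> {v,v'}" "fst b \<in> {v,v'}" "fst c1 \<in> {v,v'}" "fst d1 \<in> {v,v'}" "fst c2 \<in> {v,v'}"
     "fst d2 \<in> {v,v'}" "fst c3 \<in> {v,v'}" "fst d3 \<in> {v,v'}"
  proof -
    have "{a,b,c1,d1,c2,d2,c3,d3} \<subseteq> ?N" using N by (rule equalityD1)
    then have "a \<in> ?N \<and> b \<in> ?N \<and> c1 \<in> ?N \<and> d1 \<in> ?N \<and> c2 \<in> ?N \<and> d2 \<in> ?N \<and> c3 \<in> ?N \<and> d3 \<in> ?N"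
      by (simp only: insert_subset empty_subsetI)
    then show "fst a \<in> {v,v'}" "fst b \<in> {v,v'}" "fst c1 \<in> {v,v'}" "fst d1 \<in> {v,v'}" "fst c2 \<in> {v,v'}"
     "fst d2 \<in> {v,v'}" "fst c3 \<in> {v,v'}" "fst d3 \<in> {v,v'}"
      using fstN by metis+
  qed
  have S': "all_slots (verts G') = ?S \<union> {a,b,c1,d1,c2,d2,c3,d3}"
  proof -
    have "all_slots (verts G') = ?S \<union> ?N"
      unfolding vG' all_slots_def true_slots_def by auto
    then show ?thesis unfolding N .
  qed
  have RS: "gadj G \<subseteq> ?S \<times> ?S" by (rule gadj_sub[OF mi])
  have H1: "gadj G' \<subseteq> gadj G \<union> P \<union> P\<inverse>"
  proof -
    have "(gedges G')\<inverse> \<subseteq> gadj G \<union> P \<union> P\<inverse>"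
    proof
      fix e assume "e \<in> (gedges G')\<inverse>"
      then obtain p q where e: "e = (p,q)" "(q,p) \<in> gedges G'" by (cases e) auto
      then have "(q,p) \<in> gadj G \<union> P \<union> P\<inverse>" using h1 by blast
      then show "e \<in> gadj G \<union> P \<union> P\<inverse>" using e gadj_sym by blast
    qed
    then show ?thesis using h1 unfolding gadj_def[of G'] by blast
  qed
  have H2: "gadj G - {(x,y),(y,x)} \<subseteq> gadj G'"
  proof
    fix e assume e: "e \<in> gadj G - {(x,y),(y,x)}"
    then obtain p q where pq: "e = (p,q)" by (cases e) auto
    have "(p,q) \<in> gedges G \<or> (q,p) \<in> gedges G" using e pq unfolding gadj_def by auto
    then show "e \<in> gadj G'"
    proof
      assume "(p,q) \<in> gedges G"
      then show ?thesis using h2 e pq by blast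
    next
      assume "(q,p) \<in> gedges G"
      then have "(q,p) \<in> gadj G'" using h2 e pq by blast
      then show ?thesis using pq gadj_sym by blast
    qed
  qed
  have surg: "all_slots (verts G') // (gadj G')\<^sup>* =
         (?S // (gadj G)\<^sup>* - {(gadj G)\<^sup>*``{x}}) \<union> {(gadj G)\<^sup>*``{x} \<union> {a,b}, {c1,d1}, {c2,d2}, {c3,d3}}"
    unfolding S'
    by (rule surgery[OF RS _ _ xS yS xy nS dist P_def H1 H2 h3]) (auto intro: gadj_sym)
  have facesG': "faces G' = (faces G - {(gadj G)\<^sup>*``{x}}) \<union> {(gadj G)\<^sup>*``{x} \<union> {a,b}, {c1,d1}, {c2,d2}, {c3,d3}}"
    unfolding faces_def surg ..
  have finQ: "finite (faces G)" unfolding faces_def using all_slots_fin[OF finV] by (rule fin_quot)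
  have XQ: "(gadj G)\<^sup>*``{x} \<in> faces G" unfolding faces_def using xS by (rule quotientI)
  have sub: "\<forall>f\<in>faces G. f \<subseteq> ?S" unfolding faces_def using quot_sub[OF RS] by blast
  have cardF: "card (faces G') = card (faces G) + 3"
    unfolding facesG' by (rule card_step[OF finQ XQ sub nS(1) nS(3) nS(5) nS(7) dist])
  have wavyG': "wavy G' = insert (min v v') (wavy G)"
  proof -
    have "wavy G' = {w \<in> verts G. w < mate G' w} \<union> {w \<in> {v,v'}. w < mate G' w}"
      unfolding wavy_def vG' by auto
    also have "{w \<in> verts G. w < mate G' w} = wavy G" unfolding wavy_def using m3 by auto
    also have "{w \<in> {v,v'}. w < mate G' w} = {min v v'}" using m1 nv(3) by (auto simp: min_def)
    finally show ?thesis by auto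
  qed
  have wsub: "wavy G \<subseteq> verts G" unfolding wavy_def by auto
  have finW: "finite (wavy G)" using wsub finV finite_subset by blast
  have vnW: "min v v' \<notin> wavy G" using wsub nv by (auto simp: min_def)
  have cardW: "card (wavy G') = card (wavy G) + 1" unfolding wavyG' using finW vnW by simp
  have cardV: "card (verts G') = card (verts G) + 2" unfolding vG' using finV nv by simp
  have nW: "fst a \<notin> wavy G" "fst b \<notin> wavy G" "fst c1 \<notin> wavy G" "fst d1 \<notin> wavy G" "fst c2 \<notin> wavy G"
     "fst d2 \<notin> wavy G" "fst c3 \<notin> wavy G" "fst d3 \<notin> wavy G"
  proof -
    have "fst s \<notin> wavy G" if "fst s \<in> {v,v'}" for s using that wsub nv by auto
    then show "fst a \<notin> wavy G" "fst b \<notin> wavy G" "fst c1 \<notin> wavy G" "fst d1 \<notin> wavy G" "fst c2 \<notin> wavy G"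
     "fst d2 \<notin> wavy G" "fst c3 \<notin> wavy G" "fst d3 \<notin> wavy G" using fN by metis+
  qed
  have s1: "colf {c1,d1} (min v v') = 1 \<or> colf {c1,d1} (min v v') = -1"
  proof (cases "v < v'")
    case True
    then show ?thesis using colf_pair[OF nv(3) C1(3), of j1] C1 by (simp add: min_def)
  next
    case False
    have "colf {(v',j1),(v,i1)} v' = 1 \<or> colf {(v',j1),(v,i1)} v' = -1"
      using colf_pair[of v' v j1 i1] nv(3) C1(4) by auto
    moreover have "{(v',j1),(v,i1)} = {c1,d1}" using C1 by auto
    ultimately show ?thesis using False nv(3) by (simp add: min_def)
  qed
  have spanG: "spanP (faces G) (wavy G)" using mi unfolding minv_def by blast
  have spanG': "spanP (faces G') (wavy G')"
    unfolding facesG' wavyG'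
    by (rule span_step[OF spanG finQ XQ sub nS(1) nS(3) nS(5) nS(7) dist nW vnW s1])
  obtain k where k: "card (verts G) = 2*k" "card (faces G) = 1 + 3*k" "card (wavy G) = k"
    using mi unfolding minv_def by blast
  have E: "\<exists>k. card (verts G') = 2*k \<and> card (faces G') = 1 + 3*k \<and> card (wavy G') = k"
    using k cardV cardF cardW by (intro exI[of _ "k+1"]) simp
  have fin': "finite (verts G')" and z': "0 \<notin> verts G'" using finV zV nv unfolding vG' by auto
  show ?thesis unfolding minv_def by (intro conjI fin' z' wf2 wf3 wf4 E spanG')
qed




lemma rank_full:
  fixes A :: "real mat"
  assumes A: "A \<in> carrier_mat n nc"
    and ex: "\<And>k. k < n \<Longrightarrow> \<exists>x \<in> carrier_vec nc. A *\<^sub>v x = unit_vec n k"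
  shows "vec_space.rank n A = n"
proof -
  interpret vec_space "TYPE(real)" n .
  have cs: "set (cols A) \<subseteq> carrier_vec n" using A cols_dim by blast
  have "set (unit_vecs n) \<subseteq> span (set (cols A))"
  proof
    fix u :: "real vec" assume "u \<in> set (unit_vecs n)"
    then obtain k where k: "k < n" "u = unit_vec n k" unfolding unit_vecs_def by auto
    obtain x where x: "x \<in> carrier_vec nc" "A *\<^sub>v x = unit_vec n k" using ex[OF k(1)] by blast
    have "A *\<^sub>v x \<in> col_space A" unfolding col_space_eq[OF A] using A x by auto
    then show "u \<in> span (set (cols A))" using x k unfolding col_space_def by simp
  qed
  then have "span (set (unit_vecs n)) \<subseteq> span (set (cols A))"
    using span_subsetI[OF cs] by blast
  then have sp: "span (set (cols A)) = carrier_vec n"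
    using span_unit_vecs_is_carrier span_is_subset2[OF cs] by auto
  have e: "vs (carrier_vec n) = V" by (simp add: module_vec_def)
  show ?thesis unfolding rank_def sp e using dim_is_n by simp
qed

lemma rankE_eq:
  assumes mi: "minv G"
  shows "rankE G = card (wavy G)"
proof (cases "verts G = {}")
  case True
  then have "wavy G = {}" unfolding wavy_def by auto
  then show ?thesis using True unfolding rankE_def by simp
next
  case False
  have finV: "finite (verts G)" using mi unfolding minv_def by auto
  have finW: "finite (wavy G)" using finV unfolding wavy_def by auto
  have RS: "gadj G \<subseteq> all_slots (verts G) \<times> all_slots (verts G)" by (rule gadj_sub[OF mi])
  have finQ: "finite (faces G)" unfolding faces_def using all_slots_fin[OF finV] by (rule fin_quot)
  define rs where "rs = sorted_list_of_set (wavy G)"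
  define fs where "fs = (SOME fs. distinct fs \<and> set fs = faces G)"
  have fs: "distinct fs \<and> set fs = faces G"
    unfolding fs_def by (rule someI_ex) (use finite_distinct_list[OF finQ] in blast)
  have rs: "distinct rs" "set rs = wavy G" "length rs = card (wavy G)"
    unfolding rs_def using finW by auto
  define F where "F = (\<lambda>(r, c). real (card {i\<in>{1,2::nat}. (rs ! r, i) \<in> fs ! c})
                          - real (card {i\<in>{3,4::nat}. (rs ! r, i) \<in> fs ! c}))"
  have E: "Emat G = mat (length rs) (length fs) F"
    unfolding Emat_def rs_def fs_def F_def Let_def by simp
  have Fc: "F (r, c) = colf (fs ! c) (rs ! r)" for r c unfolding F_def colf_def by simp
  have sp: "spanP (faces G) (wavy G)" using mi unfolding minv_def by blast
  have "vec_space.rank (length rs) (Emat G) = length rs"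
  proof (rule rank_full)
    show "Emat G \<in> carrier_mat (length rs) (length fs)" unfolding E by simp
  next
    fix k assume k: "k < length rs"
    then have wk: "rs ! k \<in> wavy G" using rs nth_mem by blast
    obtain c where c: "\<And>u. u \<in> wavy G \<Longrightarrow> (\<Sum>f\<in>faces G. c f * colf f u) = (if u = rs ! k then 1 else 0)"
      using sp wk unfolding spanP_def by blast
    define x where "x = vec (length fs) (\<lambda>j. c (fs ! j))"
    have "Emat G *\<^sub>v x = unit_vec (length rs) k"
    proof (rule eq_vecI)
      show "dim_vec (Emat G *\<^sub>v x) = dim_vec (unit_vec (length rs) k)" unfolding E by simp
    next
      fix r assume "r < dim_vec (unit_vec (length rs) k)"
      then have r: "r < length rs" by simp
      have "(Emat G *\<^sub>v x) $ r = (\<Sum>j\<in>{0..<length fs}. colf (fs ! j) (rs ! r) * c (fs ! j))"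
        unfolding E x_def using r by (simp add: scalar_prod_def Fc)
      also have "\<dots> = (\<Sum>j\<in>{..<length fs}. (\<lambda>f. c f * colf f (rs ! r)) (fs ! j))"
        by (simp add: atLeast0LessThan mult.commute)
      also have "\<dots> = (\<Sum>f\<in>set fs. c f * colf f (rs ! r))"
        by (rule sum.reindex_bij_betw[OF bij_betw_nth]) (use fs in auto)
      also have "\<dots> = (if rs ! r = rs ! k then 1 else 0)"
      proof -
        have "rs ! r \<in> wavy G" using rs r by (metis nth_mem)
        then show ?thesis using c[of "rs ! r"] fs by simp
      qed
      also have "\<dots> = unit_vec (length rs) k $ r"
        using rs(1) r k nth_eq_iff_index_eq by (auto simp: unit_vec_def)
      finally show "(Emat G *\<^sub>v x) $ r = unit_vec (length rs) k $ r" .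
    qed
    moreover have "x \<in> carrier_vec (length fs)" unfolding x_def by simp
    ultimately show "\<exists>x \<in> carrier_vec (length fs). Emat G *\<^sub>v x = unit_vec (length rs) k" by blast
  qed
  moreover have "dim_row (Emat G) = length rs" unfolding E by simp
  ultimately show ?thesis using False rs unfolding rankE_def by simp
qed

lemma degree_zero:
  assumes mi: "minv G"
  shows "degree G = 0"
proof -
  obtain k where k: "card (verts G) = 2*k" "card (faces G) = 1 + 3*k" "card (wavy G) = k"
    using mi unfolding minv_def by blast
  show ?thesis unfolding degree_def nfaces_def rankE_eq[OF mi] k by simp
qed




lemma add_dash_Some: "add_dash d s t u = Some w \<longleftrightarrow> (u = t \<and> w = s) \<or> (u = s \<and> u \<noteq> t \<and> w = t) \<or> (u \<noteq> s \<and> u \<noteq> t \<and> d u = Some w)"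
  unfolding add_dash_def by auto

lemma del_dash_Some: "del_dash d s t u = Some w \<longleftrightarrow> u \<noteq> s \<and> u \<noteq> t \<and> d u = Some w"
  unfolding del_dash_def by auto

lemma p8: "p < (8::nat) \<Longrightarrow> p = 0 \<or> p = 1 \<or> p = 2 \<or> p = 3 \<or> p = 4 \<or> p = 5 \<or> p = 6 \<or> p = 7"
  by auto

lemma i4: "i \<in> {1..4::nat} \<Longrightarrow> i = 1 \<or> i = 2 \<or> i = 3 \<or> i = 4"
  by auto

lemma perm_range: "p < 8 \<Longrightarrow> i \<in> {1..4} \<Longrightarrow> prop_perm p i \<in> {1..4}"
  using p8[of p] i4[of i] by (auto simp: prop_perm_def)

lemma perm_inj: "p < 8 \<Longrightarrow> i \<in> {1..4} \<Longrightarrow> k \<in> {1..4} \<Longrightarrow> prop_perm p i = prop_perm p k \<Longrightarrow> i = k"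
  using p8[of p] i4[of i] i4[of k] by (auto simp: prop_perm_def)

lemma perm_surj: "p < 8 \<Longrightarrow> j \<in> {1..4} \<Longrightarrow> \<exists>i\<in>{1..4}. prop_perm p i = j"
proof -
  assume p: "p < 8" and j: "j \<in> {1..4}"
  have "prop_perm p ` {1..4} \<subseteq> {1..4}" using perm_range[OF p] by auto
  moreover have "inj_on (prop_perm p) {1..4}" using perm_inj[OF p] by (auto simp: inj_on_def)
  ultimately have "prop_perm p ` {1..4} = {1..4}"
    by (simp add: card_image card_subset_eq)
  then have "j \<in> prop_perm p ` {1..4}" using j by simp
  then show ?thesis by blast
qed

lemma perm_the:
  assumes p: "p < 8" and j: "j \<in> {1..4}"
  shows "(THE i. i \<in> {1..4} \<and> prop_perm p i = j) \<in> {1..4} \<and> prop_perm p (THE i. i \<in> {1..4} \<and> prop_perm p i = j) = j"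
proof -
  have "\<exists>!i. i \<in> {1..4} \<and> prop_perm p i = j"
    using perm_surj[OF p j] perm_inj[OF p] by blast
  then show ?thesis by (rule theI')
qed

locale ins_ctx =
  fixes G :: mgraph and v v' :: nat and p :: nat
  assumes mi: "minv G" and nv: "v \<notin> verts G" "v' \<notin> verts G" "v \<noteq> v'" "v \<noteq> 0" "v' \<noteq> 0" and p: "p < 8"
begin

abbreviation "C' \<equiv> set_prop (cor G) v v' p"

lemma corG: "cor G s = Some t \<Longrightarrow> s \<in> true_slots (verts G) \<and> t \<in> true_slots (verts G)"
  using mi unfolding minv_def by blast

lemma corG_fst: "cor G s = Some t \<Longrightarrow> fst s \<noteq> v \<and> fst s \<noteq> v' \<and> fst t \<noteq> v \<and> fst t \<noteq> v'"
  using corG nv unfolding true_slots_def by fastforce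

lemma C'_old: "cor G s = Some t \<Longrightarrow> C' s = Some t"
  using corG_fst unfolding set_prop_def by auto

lemma C'_new: "i \<in> {1..4} \<Longrightarrow> C' (v,i) = Some (v', prop_perm p i)"
  unfolding set_prop_def by auto

lemma C'_cases:
  assumes "C' s = Some t"
  shows "cor G s = Some t \<or> (\<exists>i\<in>{1..4}. (s = (v,i) \<and> t = (v', prop_perm p i)) \<or> (s = (v', prop_perm p i) \<and> t = (v,i)))"
proof (cases "fst s = v \<and> snd s \<in> {1..4}")
  case True
  then show ?thesis using assms unfolding set_prop_def by (cases s) auto
next
  case F1: False
  show ?thesis
  proof (cases "fst s = v' \<and> snd s \<in> {1..4}")
    case True
    define i where "i = (THE i. i \<in> {1..4} \<and> prop_perm p i = snd s)"
    have i: "i \<in> {1..4}" "prop_perm p i = snd s" using perm_the[OF p, of "snd s"] True unfolding i_def by auto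
    have "t = (v, i)" using assms F1 True nv(3) unfolding set_prop_def i_def by auto
    then show ?thesis using i True by (cases s) auto
  next
    case False
    then have "C' s = cor G s" using F1 unfolding set_prop_def by auto
    then show ?thesis using assms by auto
  qed
qed

lemma C'_slots:
  assumes "C' s = Some t"
  shows "s \<in> true_slots (verts G \<union> {v,v'}) \<and> t \<in> true_slots (verts G \<union> {v,v'})"
proof -
  have mono: "true_slots (verts G) \<subseteq> true_slots (verts G \<union> {v,v'})" unfolding true_slots_def by auto
  have nw: "(v,i) \<in> true_slots (verts G \<union> {v,v'}) \<and> (v',i) \<in> true_slots (verts G \<union> {v,v'})" if "i \<in> {1..4}" for i
    using that unfolding true_slots_def by auto
  from C'_cases[OF assms] show ?thesis
  proof
    assume "cor G s = Some t" then show ?thesis using corG mono by blast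
  next
    assume "\<exists>i\<in>{1..4}. (s = (v,i) \<and> t = (v', prop_perm p i)) \<or> (s = (v', prop_perm p i) \<and> t = (v,i))"
    then obtain i where i: "i \<in> {1..4}" "(s = (v,i) \<and> t = (v', prop_perm p i)) \<or> (s = (v', prop_perm p i) \<and> t = (v,i))" by blast
    have "prop_perm p i \<in> {1..4}" using perm_range[OF p i(1)] .
    then show ?thesis using i nw by metis
  qed
qed

lemma mate_new: "fst (the (C' (v,1))) = v'" "fst (the (C' (v',1))) = v"
proof -
  show "fst (the (C' (v,1))) = v'" using C'_new[of 1] by simp
  have "C' (v',1) = Some (v, THE i. i \<in> {1..4} \<and> prop_perm p i = 1)"
    using nv(3) unfolding set_prop_def by auto
  then show "fst (the (C' (v',1))) = v" by simp
qed

lemma mate_old: "w \<in> verts G \<Longrightarrow> C' (w,1) = cor G (w,1)"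
  using nv unfolding set_prop_def by auto

lemma dshG: "dsh G s = Some t \<Longrightarrow> s \<in> all_slots (verts G) \<and> t \<in> all_slots (verts G) \<and> dsh G t = Some s"
  using mi unfolding minv_def by blast

lemma parG: "par G w = Some s \<Longrightarrow> s \<in> all_slots (verts G)"
  using mi unfolding minv_def by blast

lemma slot_new: "fst s \<in> {v,v'} \<Longrightarrow> s \<notin> all_slots (verts G)"
  using nv unfolding all_slots_def true_slots_def by auto

lemma all_mono: "all_slots (verts G) \<subseteq> all_slots (verts G \<union> {v,v'})"
  unfolding all_slots_def true_slots_def by auto

lemma true_new: "i \<in> {1..4} \<Longrightarrow> (v,i) \<in> all_slots (verts G \<union> {v,v'}) \<and> (v',i) \<in> all_slots (verts G \<union> {v,v'})"
  unfolding all_slots_def true_slots_def by auto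

lemma dsh_new: "fst s \<in> {v,v'} \<Longrightarrow> dsh G s = None"
  using dshG slot_new by (metis option.exhaust)

lemma old_fst: "s \<in> all_slots (verts G) \<Longrightarrow> fst s \<noteq> v \<and> fst s \<noteq> v'"
  using slot_new by blast

lemma par_old: "par G w = Some s \<Longrightarrow> w \<noteq> v \<and> w \<noteq> v'"
  using nv unfolding verts_def by auto

lemma cor_in_P:
  assumes "\<And>i. i \<in> {1..4} \<Longrightarrow> ((v,i),(v',prop_perm p i)) \<in> P"
    and "C' s = Some t"
  shows "cor G s = Some t \<or> (s,t) \<in> P \<union> P\<inverse>"
  using C'_cases[OF assms(2)] assms(1) by blast

lemma gedgesI_par: "par H w = Some s \<Longrightarrow> ((w,1),s) \<in> gadj H"
  unfolding gadj_def gedges_def by auto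
lemma gedgesI_dsh: "dsh H s = Some t \<Longrightarrow> (s,t) \<in> gadj H"
  unfolding gadj_def gedges_def by auto
lemma gedgesI_cor: "cor H s = Some t \<Longrightarrow> (s,t) \<in> gadj H"
  unfolding gadj_def gedges_def by auto

end

lemma h1_helper:
  assumes "\<And>w s. par G' w = Some s \<Longrightarrow> par G w = Some s \<or> ((w,1),s) \<in> E"
    "\<And>s t. dsh G' s = Some t \<Longrightarrow> dsh G s = Some t \<or> (s,t) \<in> E"
    "\<And>s t. cor G' s = Some t \<Longrightarrow> cor G s = Some t \<or> (s,t) \<in> E"
  shows "gedges G' \<subseteq> gadj G \<union> E"
proof
  fix e assume "e \<in> gedges G'"
  then consider (par) w s where "e = ((w,1),s)" "par G' w = Some s" | (dsh) s t where "e = (s,t)" "dsh G' s = Some t"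
    | (cor) s t where "e = (s,t)" "cor G' s = Some t" | (root) "e = ((0,1),(0,2))" unfolding gedges_def by auto
  then show "e \<in> gadj G \<union> E"
  proof cases
    case par then show ?thesis using assms(1)[OF par(2)] unfolding gadj_def gedges_def by auto
  next
    case dsh then show ?thesis using assms(2)[OF dsh(2)] unfolding gadj_def gedges_def by auto
  next
    case cor then show ?thesis using assms(3)[OF cor(2)] unfolding gadj_def gedges_def by auto
  next
    case root then show ?thesis unfolding gadj_def gedges_def by auto
  qed
qed

lemma h2_helper:
  assumes "\<And>w s. par G w = Some s \<Longrightarrow> par G' w = Some s \<or> ((w,1),s) \<in> D"
    "\<And>s t. dsh G s = Some t \<Longrightarrow> dsh G' s = Some t \<or> (s,t) \<in> D"
    "\<And>s t. cor G s = Some t \<Longrightarrow> cor G' s = Some t"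
  shows "gedges G - D \<subseteq> gadj G'"
proof
  fix e assume "e \<in> gedges G - D"
  then have eD: "e \<notin> D" by auto
  from \<open>e \<in> gedges G - D\<close> consider (par) w s where "e = ((w,1),s)" "par G w = Some s" | (dsh) s t where "e = (s,t)" "dsh G s = Some t"
    | (cor) s t where "e = (s,t)" "cor G s = Some t" | (root) "e = ((0,1),(0,2))" unfolding gedges_def by auto
  then show "e \<in> gadj G'"
  proof cases
    case par then show ?thesis using assms(1)[OF par(2)] eD unfolding gadj_def gedges_def by auto
  next
    case dsh then show ?thesis using assms(2)[OF dsh(2)] eD unfolding gadj_def gedges_def by auto
  next
    case cor then show ?thesis using assms(3)[OF cor(2)] unfolding gadj_def gedges_def by auto
  next
    case root then show ?thesis unfolding gadj_def gedges_def by auto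
  qed
qed


lemma add_dash_Some2: "A \<noteq> B \<Longrightarrow> add_dash d A B s = Some t \<longleftrightarrow> ((s,t) = (A,B) \<or> (s,t) = (B,A)) \<or> (s \<noteq> A \<and> s \<noteq> B \<and> d s = Some t)"
  unfolding add_dash_def by auto

lemma dashI:
  assumes "distinct [A1,B1,A2,B2,A3,B3]" "x \<notin> {A1,B1,A2,B2,A3,B3}" "y \<notin> {A1,B1,A2,B2,A3,B3}"
    "d A1 = None" "d B1 = None" "d A2 = None" "d B2 = None" "d A3 = None" "d B3 = None"
  shows "add_dash (add_dash (add_dash (del_dash d x y) A1 B1) A2 B2) A3 B3 s = Some t \<longleftrightarrow>
    (s,t) \<in> {(A1,B1),(B1,A1),(A2,B2),(B2,A2),(A3,B3),(B3,A3)} \<or> (s \<noteq> x \<and> s \<noteq> y \<and> d s = Some t)"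
  using assms by (auto simp: add_dash_Some2 del_dash_Some)

lemma dashII:
  assumes "distinct [A1,A2,B2,A3,B3]" "x \<notin> {A1,A2,B2,A3,B3}" "y \<notin> {A1,A2,B2,A3,B3}"
    "d A1 = None" "d A2 = None" "d B2 = None" "d A3 = None" "d B3 = None"
  shows "add_dash (add_dash (add_dash (del_dash d x y) A1 y) A2 B2) A3 B3 s = Some t \<longleftrightarrow>
    (s,t) \<in> {(A1,y),(y,A1),(A2,B2),(B2,A2),(A3,B3),(B3,A3)} \<or> (s \<noteq> x \<and> s \<noteq> y \<and> d s = Some t)"
  using assms by (auto simp: add_dash_Some2 del_dash_Some)

lemma dashIII:
  assumes "distinct [A1,B1,A2,B2,A3]" "x \<notin> {A1,B1,A2,B2,A3}" "y \<notin> {A1,B1,A2,B2,A3}"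
    "d A1 = None" "d B1 = None" "d A2 = None" "d B2 = None" "d A3 = None"
  shows "add_dash (add_dash (add_dash (del_dash d x y) A1 B1) A2 B2) A3 y s = Some t \<longleftrightarrow>
    (s,t) \<in> {(A1,B1),(B1,A1),(A2,B2),(B2,A2),(A3,y),(y,A3)} \<or> (s \<noteq> x \<and> s \<noteq> y \<and> d s = Some t)"
  using assms by (auto simp: add_dash_Some2 del_dash_Some)

lemma dashS:
  assumes "distinct [A1,B1,A2,B2]"
    "d A1 = None" "d B1 = None" "d A2 = None" "d B2 = None"
  shows "add_dash (add_dash d A1 B1) A2 B2 s = Some t \<longleftrightarrow>
    (s,t) \<in> {(A1,B1),(B1,A1),(A2,B2),(B2,A2)} \<or> d s = Some t"
  using assms by (auto simp: add_dash_Some2)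




lemma step_I:
  assumes mi: "minv G" and dxy: "dsh G x = Some y" and nv: "v \<notin> verts G" "v' \<notin> verts G" "v \<noteq> v'" "v \<noteq> 0" "v' \<noteq> 0"
    and b: "b \<in> {3,4}" and p: "p < 8" and pp: "prop_perm p 2 = 2" "prop_perm p 3 = b" "prop_perm p 4 = 7 - b"
  shows "minv \<lparr>par = (par G)(v \<mapsto> x, v' \<mapsto> y),
              dsh = add_dash (add_dash (add_dash (del_dash (dsh G) x y)
                       (v,2) (v',2)) (v,3) (v',b)) (v,4) (v',7-b),
              cor = set_prop (cor G) v v' p\<rparr>" (is "minv ?G'")
proof -
  interpret ins_ctx G v v' p using mi nv p by unfold_locales
  define c where "c = 7 - b"
  have p1: "prop_perm p 1 = 1" using p8[OF p] b pp by (auto simp: prop_perm_def)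
  have bc: "b \<in> {3,4}" "c \<in> {3,4}" "b \<noteq> c" using b unfolding c_def by auto
  have pp4: "prop_perm p 4 = c" using pp(3) unfolding c_def .
  have vG': "verts ?G' = verts G \<union> {v,v'}" unfolding verts_def by auto
  have xyS: "x \<in> all_slots (verts G)" "y \<in> all_slots (verts G)" "dsh G y = Some x" using dshG[OF dxy] by auto
  have xyn: "fst x \<noteq> v" "fst x \<noteq> v'" "fst y \<noteq> v" "fst y \<noteq> v'" using old_fst[OF xyS(1)] old_fst[OF xyS(2)] by auto
  let ?ND = "{((v,2),(v',2)),((v',2),(v,2)),((v,3),(v',b)),((v',b),(v,3)),((v,4),(v',c)),((v',c),(v,4))}"
  have D: "dsh ?G' s = Some t \<longleftrightarrow> (s,t) \<in> ?ND \<or> (s \<noteq> x \<and> s \<noteq> y \<and> dsh G s = Some t)" for s t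
    unfolding c_def[symmetric] simp_thms mgraph.simps
  proof (rule dashI)
    show "distinct [(v,2),(v',2),(v,3),(v',b),(v,4),(v',c)]" using bc nv(3) by auto
    show "x \<notin> {(v,2),(v',2),(v,3),(v',b),(v,4),(v',c)}" using xyn by auto
    show "y \<notin> {(v,2),(v',2),(v,3),(v',b),(v,4),(v',c)}" using xyn by auto
  qed (rule dsh_new, simp)+
  have wf2: "\<forall>w s. par ?G' w = Some s \<longrightarrow> s \<in> all_slots (verts ?G')"
    unfolding vG' using parG all_mono xyS by auto
  have wf3: "\<forall>s t. dsh ?G' s = Some t \<longrightarrow> s \<in> all_slots (verts ?G') \<and> t \<in> all_slots (verts ?G') \<and> dsh ?G' t = Some s"
  proof (intro allI impI)
    fix s t assume "dsh ?G' s = Some t"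
    then consider "(s,t) \<in> ?ND" | "s \<noteq> x" "s \<noteq> y" "dsh G s = Some t" using D[of s t] by blast
    then show "s \<in> all_slots (verts ?G') \<and> t \<in> all_slots (verts ?G') \<and> dsh ?G' t = Some s"
    proof cases
      case 1
      have sym: "(t,s) \<in> ?ND" using 1 by blast
      have sl: "s \<in> {(v,2),(v',2),(v,3),(v',b),(v,4),(v',c)}" "t \<in> {(v,2),(v',2),(v,3),(v',b),(v,4),(v',c)}"
        using 1 by blast+
      have "{(v,2),(v',2),(v,3),(v',b),(v,4),(v',c)} \<subseteq> all_slots (verts G \<union> {v,v'})"
        using true_new bc by auto
      then show ?thesis unfolding vG' using sl sym D[of t s] by blast
    next
      case 2
      have g: "s \<in> all_slots (verts G)" "t \<in> all_slots (verts G)" "dsh G t = Some s" using dshG[OF 2(3)] by auto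
      have t1: "t \<noteq> x"
      proof
        assume "t = x" then have "dsh G x = Some s" using g by simp
        then show False using dxy 2 by simp
      qed
      have t2: "t \<noteq> y"
      proof
        assume "t = y" then have "dsh G y = Some s" using g by simp
        then show False using xyS(3) 2 by simp
      qed
      note t = t1 t2
      have "dsh ?G' t = Some s" using D[of t s] t g(3) by blast
      then show ?thesis unfolding vG' using g all_mono by blast
    qed
  qed
  have wf4: "\<forall>s t. cor ?G' s = Some t \<longrightarrow> s \<in> true_slots (verts ?G') \<and> t \<in> true_slots (verts ?G')"
    unfolding vG' using C'_slots by simp
  have xy: "(x,y) \<in> gadj G" using gedgesI_dsh[OF dxy] .
  have N: "{(v,1),(v',1),(v,2),(v',2),(v,3),(v',b),(v,4),(v',c)} = {(v,1),(v,2),(v,3),(v,4),(v',1),(v',2),(v',3),(v',4)}"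
    using bc by auto
  have dist: "distinct [(v,1),(v',1),(v,2),(v',2),(v,3),(v',b),(v,4),(v',c)]" using bc nv(3) by auto
  define P where "P = {(x,(v,1)),((v,1),(v',1)),((v',1),y),((v,2),(v',2)),((v,3),(v',b)),((v,4),(v',c))}"
  have h1: "gedges ?G' \<subseteq> gadj G \<union> (P \<union> P\<inverse>)"
  proof (rule h1_helper)
    fix w s assume "par ?G' w = Some s"
    then show "par G w = Some s \<or> ((w,1),s) \<in> P \<union> P\<inverse>" unfolding P_def by (auto split: if_splits)
  next
    fix s t assume "dsh ?G' s = Some t"
    then show "dsh G s = Some t \<or> (s,t) \<in> P \<union> P\<inverse>" unfolding D P_def by auto
  next
    fix s t assume "cor ?G' s = Some t"
    then have "C' s = Some t" by simp
    moreover have "((v,i),(v',prop_perm p i)) \<in> P" if "i \<in> {1..4}" for i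
      using i4[OF that] p1 pp(1,2) pp4 unfolding P_def by auto
    ultimately show "cor G s = Some t \<or> (s,t) \<in> P \<union> P\<inverse>" using cor_in_P by blast
  qed
  have h2: "gedges G - {(x,y),(y,x)} \<subseteq> gadj ?G'"
  proof (rule h2_helper)
    fix w s assume "par G w = Some s"
    then show "par ?G' w = Some s \<or> ((w,1),s) \<in> {(x,y),(y,x)}" using par_old by auto
  next
    fix s t assume st: "dsh G s = Some t"
    show "dsh ?G' s = Some t \<or> (s,t) \<in> {(x,y),(y,x)}"
      using st dxy xyS(3) unfolding D by auto
  next
    fix s t assume "cor G s = Some t"
    then show "cor ?G' s = Some t" using C'_old by simp
  qed
  have h3: "P \<subseteq> gadj ?G'"
  proof -
    have 1: "((v,1),x) \<in> gadj ?G'" "((v',1),y) \<in> gadj ?G'" by (rule gedgesI_par; simp add: nv(3))+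
    have 2: "((v,1),(v',1)) \<in> gadj ?G'" using gedgesI_cor[of ?G' "(v,1)" "(v',1)"] C'_new[of 1] p1 by simp
    have 3: "((v,2),(v',2)) \<in> gadj ?G'" "((v,3),(v',b)) \<in> gadj ?G'" "((v,4),(v',c)) \<in> gadj ?G'"
      by (rule gedgesI_dsh; simp only: D; simp)+
    show ?thesis unfolding P_def using 1 2 3 gadj_sym by blast
  qed
  have h1': "gedges ?G' \<subseteq> gadj G \<union> P \<union> P\<inverse>" using h1 by (simp add: Un_assoc)
  have m1: "mate ?G' v = v'" "mate ?G' v' = v" unfolding mate_def using mate_new by simp_all
  have m3: "\<forall>w\<in>verts G. mate ?G' w = mate G w" unfolding mate_def using mate_old by simp
  show ?thesis
    by (rule gen_step[OF mi vG' nv wf2 wf3 wf4 xyS(1,2) xy N dist refl refl _ _ P_def h1' h2 h3 m1 m3]) auto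
qed


lemma step_II:
  assumes mi: "minv G" and dxy: "dsh G x = Some y" and nv: "v \<notin> verts G" "v' \<notin> verts G" "v \<noteq> v'" "v \<noteq> 0" "v' \<noteq> 0"
    and b: "b \<in> {3,4}" and p: "p < 8" and pp: "prop_perm p 2 = 1" "prop_perm p 3 = b" "prop_perm p 4 = 7 - b"
  shows "minv \<lparr>par = (par G)(v \<mapsto> x, v' \<mapsto> (v,2)),
              dsh = add_dash (add_dash (add_dash (del_dash (dsh G) x y)
                       (v',2) y) (v,3) (v',b)) (v,4) (v',7-b),
              cor = set_prop (cor G) v v' p\<rparr>" (is "minv ?G'")
proof -
  interpret ins_ctx G v v' p using mi nv p by unfold_locales
  define c where "c = 7 - b"
  have p1: "prop_perm p 1 = 2" using p8[OF p] b pp by (auto simp: prop_perm_def)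
  have bc: "b \<in> {3,4}" "c \<in> {3,4}" "b \<noteq> c" using b unfolding c_def by auto
  have pp4: "prop_perm p 4 = c" using pp(3) unfolding c_def .
  have vG': "verts ?G' = verts G \<union> {v,v'}" unfolding verts_def by auto
  have xyS: "x \<in> all_slots (verts G)" "y \<in> all_slots (verts G)" "dsh G y = Some x" using dshG[OF dxy] by auto
  have xyn: "fst x \<noteq> v" "fst x \<noteq> v'" "fst y \<noteq> v" "fst y \<noteq> v'" using old_fst[OF xyS(1)] old_fst[OF xyS(2)] by auto
  let ?ND = "{((v',2),y),(y,(v',2)),((v,3),(v',b)),((v',b),(v,3)),((v,4),(v',c)),((v',c),(v,4))}"
  have D: "dsh ?G' s = Some t \<longleftrightarrow> (s,t) \<in> ?ND \<or> (s \<noteq> x \<and> s \<noteq> y \<and> dsh G s = Some t)" for s t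
    unfolding c_def[symmetric] simp_thms mgraph.simps
  proof (rule dashII)
    show "distinct [(v',2),(v,3),(v',b),(v,4),(v',c)]" using bc nv(3) by auto
    show "x \<notin> {(v',2),(v,3),(v',b),(v,4),(v',c)}" using xyn by auto
    show "y \<notin> {(v',2),(v,3),(v',b),(v,4),(v',c)}" using xyn by auto
  qed (rule dsh_new, simp)+
  have wf2: "\<forall>w s. par ?G' w = Some s \<longrightarrow> s \<in> all_slots (verts ?G')"
    unfolding vG' using parG all_mono xyS true_new by auto
  have wf3: "\<forall>s t. dsh ?G' s = Some t \<longrightarrow> s \<in> all_slots (verts ?G') \<and> t \<in> all_slots (verts ?G') \<and> dsh ?G' t = Some s"
  proof (intro allI impI)
    fix s t assume "dsh ?G' s = Some t"
    then consider "(s,t) \<in> ?ND" | "s \<noteq> x" "s \<noteq> y" "dsh G s = Some t" using D[of s t] by blast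
    then show "s \<in> all_slots (verts ?G') \<and> t \<in> all_slots (verts ?G') \<and> dsh ?G' t = Some s"
    proof cases
      case 1
      have sym: "(t,s) \<in> ?ND" using 1 by blast
      have sl: "s \<in> {(v',2),y,(v,3),(v',b),(v,4),(v',c)}" "t \<in> {(v',2),y,(v,3),(v',b),(v,4),(v',c)}"
        using 1 by blast+
      have "{(v',2),y,(v,3),(v',b),(v,4),(v',c)} \<subseteq> all_slots (verts G \<union> {v,v'})"
        using true_new bc all_mono xyS(2) by auto
      then show ?thesis unfolding vG' using sl sym D[of t s] by blast
    next
      case 2
      have g: "s \<in> all_slots (verts G)" "t \<in> all_slots (verts G)" "dsh G t = Some s" using dshG[OF 2(3)] by auto
      have t1: "t \<noteq> x"
      proof
        assume "t = x" then have "dsh G x = Some s" using g by simp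
        then show False using dxy 2 by simp
      qed
      have t2: "t \<noteq> y"
      proof
        assume "t = y" then have "dsh G y = Some s" using g by simp
        then show False using xyS(3) 2 by simp
      qed
      have "dsh ?G' t = Some s" using D[of t s] t1 t2 g(3) by blast
      then show ?thesis unfolding vG' using g all_mono by blast
    qed
  qed
  have wf4: "\<forall>s t. cor ?G' s = Some t \<longrightarrow> s \<in> true_slots (verts ?G') \<and> t \<in> true_slots (verts ?G')"
    unfolding vG' using C'_slots by simp
  have xy: "(x,y) \<in> gadj G" using gedgesI_dsh[OF dxy] .
  have N: "{(v,1),(v',2),(v,2),(v',1),(v,3),(v',b),(v,4),(v',c)} = {(v,1),(v,2),(v,3),(v,4),(v',1),(v',2),(v',3),(v',4)}"
    using bc by auto
  have dist: "distinct [(v,1),(v',2),(v,2),(v',1),(v,3),(v',b),(v,4),(v',c)]" using bc nv(3) by auto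
  define P where "P = {(x,(v,1)),((v,1),(v',2)),((v',2),y),((v,2),(v',1)),((v,3),(v',b)),((v,4),(v',c))}"
  have h1: "gedges ?G' \<subseteq> gadj G \<union> (P \<union> P\<inverse>)"
  proof (rule h1_helper)
    fix w s assume "par ?G' w = Some s"
    then show "par G w = Some s \<or> ((w,1),s) \<in> P \<union> P\<inverse>" unfolding P_def by (auto split: if_splits)
  next
    fix s t assume "dsh ?G' s = Some t"
    then show "dsh G s = Some t \<or> (s,t) \<in> P \<union> P\<inverse>" unfolding D P_def by auto
  next
    fix s t assume "cor ?G' s = Some t"
    then have "C' s = Some t" by simp
    moreover have "((v,i),(v',prop_perm p i)) \<in> P" if "i \<in> {1..4}" for i
      using i4[OF that] p1 pp(1,2) pp4 unfolding P_def by auto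
    ultimately show "cor G s = Some t \<or> (s,t) \<in> P \<union> P\<inverse>" using cor_in_P by blast
  qed
  have h2: "gedges G - {(x,y),(y,x)} \<subseteq> gadj ?G'"
  proof (rule h2_helper)
    fix w s assume "par G w = Some s"
    then show "par ?G' w = Some s \<or> ((w,1),s) \<in> {(x,y),(y,x)}" using par_old by auto
  next
    fix s t assume st: "dsh G s = Some t"
    show "dsh ?G' s = Some t \<or> (s,t) \<in> {(x,y),(y,x)}"
      using st dxy xyS(3) unfolding D by auto
  next
    fix s t assume "cor G s = Some t"
    then show "cor ?G' s = Some t" using C'_old by simp
  qed
  have h3: "P \<subseteq> gadj ?G'"
  proof -
    have 1: "((v,1),x) \<in> gadj ?G'" "((v',1),(v,2)) \<in> gadj ?G'" by (rule gedgesI_par; simp add: nv(3))+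
    have 2: "((v,1),(v',2)) \<in> gadj ?G'" using gedgesI_cor[of ?G' "(v,1)" "(v',2)"] C'_new[of 1] p1 by simp
    have 3: "((v',2),y) \<in> gadj ?G'" "((v,3),(v',b)) \<in> gadj ?G'" "((v,4),(v',c)) \<in> gadj ?G'"
      by (rule gedgesI_dsh; simp only: D; simp)+
    show ?thesis unfolding P_def using 1 2 3 gadj_sym by blast
  qed
  have h1': "gedges ?G' \<subseteq> gadj G \<union> P \<union> P\<inverse>" using h1 by (simp add: Un_assoc)
  have m1: "mate ?G' v = v'" "mate ?G' v' = v" unfolding mate_def using mate_new by simp_all
  have m3: "\<forall>w\<in>verts G. mate ?G' w = mate G w" unfolding mate_def using mate_old by simp
  show ?thesis
    by (rule gen_step[OF mi vG' nv wf2 wf3 wf4 xyS(1,2) xy N dist refl refl _ _ P_def h1' h2 h3 m1 m3]) auto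
qed


lemma step_III:
  assumes mi: "minv G" and dxy: "dsh G x = Some y" and nv: "v \<notin> verts G" "v' \<notin> verts G" "v \<noteq> v'" "v \<noteq> 0" "v' \<noteq> 0"
    and a: "a \<in> {3,4}" and c: "c \<in> {3,4}" and p: "p < 8"
    and pp: "prop_perm p a = 1" "prop_perm p 2 = c" "prop_perm p (7 - a) = 2"
  shows "minv \<lparr>par = (par G)(v \<mapsto> x, v' \<mapsto> (v,a)),
              dsh = add_dash (add_dash (add_dash (del_dash (dsh G) x y)
                       (v,2) (v',c)) (v,7-a) (v',2)) (v',7-c) y,
              cor = set_prop (cor G) v v' p\<rparr>" (is "minv ?G'")
proof -
  interpret ins_ctx G v v' p using mi nv p by unfold_locales
  define e where "e = 7 - a"
  define f where "f = 7 - c"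
  have p1: "prop_perm p 1 = f" unfolding f_def using p8[OF p] a c pp by (auto simp: prop_perm_def)
  have ae: "a \<in> {3,4}" "e \<in> {3,4}" "a \<noteq> e" "c \<in> {3,4}" "f \<in> {3,4}" "c \<noteq> f" using a c unfolding e_def f_def by auto
  have ppe: "prop_perm p e = 2" using pp(3) unfolding e_def .
  have vG': "verts ?G' = verts G \<union> {v,v'}" unfolding verts_def by auto
  have xyS: "x \<in> all_slots (verts G)" "y \<in> all_slots (verts G)" "dsh G y = Some x" using dshG[OF dxy] by auto
  have xyn: "fst x \<noteq> v" "fst x \<noteq> v'" "fst y \<noteq> v" "fst y \<noteq> v'" using old_fst[OF xyS(1)] old_fst[OF xyS(2)] by auto
  let ?ND = "{((v,2),(v',c)),((v',c),(v,2)),((v,e),(v',2)),((v',2),(v,e)),((v',f),y),(y,(v',f))}"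
  have D: "dsh ?G' s = Some t \<longleftrightarrow> (s,t) \<in> ?ND \<or> (s \<noteq> x \<and> s \<noteq> y \<and> dsh G s = Some t)" for s t
    unfolding e_def[symmetric] f_def[symmetric] simp_thms mgraph.simps
  proof (rule dashIII)
    show "distinct [(v,2),(v',c),(v,e),(v',2),(v',f)]" using ae nv(3) by auto
    show "x \<notin> {(v,2),(v',c),(v,e),(v',2),(v',f)}" using xyn by auto
    show "y \<notin> {(v,2),(v',c),(v,e),(v',2),(v',f)}" using xyn by auto
  qed (rule dsh_new, simp)+
  have wf2: "\<forall>w s. par ?G' w = Some s \<longrightarrow> s \<in> all_slots (verts ?G')"
    unfolding vG' using parG all_mono xyS true_new ae by auto
  have wf3: "\<forall>s t. dsh ?G' s = Some t \<longrightarrow> s \<in> all_slots (verts ?G') \<and> t \<in> all_slots (verts ?G') \<and> dsh ?G' t = Some s"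
  proof (intro allI impI)
    fix s t assume "dsh ?G' s = Some t"
    then consider "(s,t) \<in> ?ND" | "s \<noteq> x" "s \<noteq> y" "dsh G s = Some t" using D[of s t] by blast
    then show "s \<in> all_slots (verts ?G') \<and> t \<in> all_slots (verts ?G') \<and> dsh ?G' t = Some s"
    proof cases
      case 1
      have sym: "(t,s) \<in> ?ND" using 1 by blast
      have sl: "s \<in> {(v,2),(v',c),(v,e),(v',2),(v',f),y}" "t \<in> {(v,2),(v',c),(v,e),(v',2),(v',f),y}"
        using 1 by blast+
      have "{(v,2),(v',c),(v,e),(v',2),(v',f),y} \<subseteq> all_slots (verts G \<union> {v,v'})"
        using true_new ae all_mono xyS(2) by auto
      then show ?thesis unfolding vG' using sl sym D[of t s] by blast
    next
      case 2
      have g: "s \<in> all_slots (verts G)" "t \<in> all_slots (verts G)" "dsh G t = Some s" using dshG[OF 2(3)] by auto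
      have t1: "t \<noteq> x"
      proof
        assume "t = x" then have "dsh G x = Some s" using g by simp
        then show False using dxy 2 by simp
      qed
      have t2: "t \<noteq> y"
      proof
        assume "t = y" then have "dsh G y = Some s" using g by simp
        then show False using xyS(3) 2 by simp
      qed
      have "dsh ?G' t = Some s" using D[of t s] t1 t2 g(3) by blast
      then show ?thesis unfolding vG' using g all_mono by blast
    qed
  qed
  have wf4: "\<forall>s t. cor ?G' s = Some t \<longrightarrow> s \<in> true_slots (verts ?G') \<and> t \<in> true_slots (verts ?G')"
    unfolding vG' using C'_slots by simp
  have xy: "(x,y) \<in> gadj G" using gedgesI_dsh[OF dxy] .
  have N: "{(v,1),(v',f),(v,2),(v',c),(v,a),(v',1),(v,e),(v',2)} = {(v,1),(v,2),(v,3),(v,4),(v',1),(v',2),(v',3),(v',4)}"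
    using ae by auto
  have dist: "distinct [(v,1),(v',f),(v,2),(v',c),(v,a),(v',1),(v,e),(v',2)]" using ae nv(3) by auto
  define P where "P = {(x,(v,1)),((v,1),(v',f)),((v',f),y),((v,2),(v',c)),((v,a),(v',1)),((v,e),(v',2))}"
  have h1: "gedges ?G' \<subseteq> gadj G \<union> (P \<union> P\<inverse>)"
  proof (rule h1_helper)
    fix w s assume "par ?G' w = Some s"
    then show "par G w = Some s \<or> ((w,1),s) \<in> P \<union> P\<inverse>" unfolding P_def by (auto split: if_splits)
  next
    fix s t assume "dsh ?G' s = Some t"
    then show "dsh G s = Some t \<or> (s,t) \<in> P \<union> P\<inverse>" unfolding D P_def by auto
  next
    fix s t assume "cor ?G' s = Some t"
    then have "C' s = Some t" by simp
    moreover have "((v,i),(v',prop_perm p i)) \<in> P" if "i \<in> {1..4}" for i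
    proof -
      have "i = 1 \<or> i = 2 \<or> i = a \<or> i = e" using i4[OF that] ae by auto
      then show ?thesis using p1 pp(1,2) ppe unfolding P_def by auto
    qed
    ultimately show "cor G s = Some t \<or> (s,t) \<in> P \<union> P\<inverse>" using cor_in_P by blast
  qed
  have h2: "gedges G - {(x,y),(y,x)} \<subseteq> gadj ?G'"
  proof (rule h2_helper)
    fix w s assume "par G w = Some s"
    then show "par ?G' w = Some s \<or> ((w,1),s) \<in> {(x,y),(y,x)}" using par_old by auto
  next
    fix s t assume st: "dsh G s = Some t"
    show "dsh ?G' s = Some t \<or> (s,t) \<in> {(x,y),(y,x)}"
      using st dxy xyS(3) unfolding D by auto
  next
    fix s t assume "cor G s = Some t"
    then show "cor ?G' s = Some t" using C'_old by simp
  qed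
  have h3: "P \<subseteq> gadj ?G'"
  proof -
    have 1: "((v,1),x) \<in> gadj ?G'" "((v',1),(v,a)) \<in> gadj ?G'" by (rule gedgesI_par; simp add: nv(3))+
    have 2: "((v,1),(v',f)) \<in> gadj ?G'" using gedgesI_cor[of ?G' "(v,1)" "(v',f)"] C'_new[of 1] p1 by simp
    have 3: "((v',f),y) \<in> gadj ?G'" "((v,2),(v',c)) \<in> gadj ?G'" "((v,e),(v',2)) \<in> gadj ?G'"
      by (rule gedgesI_dsh; simp only: D; simp)+
    show ?thesis unfolding P_def using 1 2 3 gadj_sym by blast
  qed
  have h1': "gedges ?G' \<subseteq> gadj G \<union> P \<union> P\<inverse>" using h1 by (simp add: Un_assoc)
  have m1: "mate ?G' v = v'" "mate ?G' v' = v" unfolding mate_def using mate_new by simp_all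
  have m3: "\<forall>w\<in>verts G. mate ?G' w = mate G w" unfolding mate_def using mate_old by simp
  show ?thesis
    by (rule gen_step[OF mi vG' nv wf2 wf3 wf4 xyS(1,2) xy N dist refl refl _ _ P_def h1' h2 h3 m1 m3]) (use ae in auto)
qed




lemma step_IIs:
  assumes mi: "minv G" and pz: "par G z = Some x" and nv: "v \<notin> verts G" "v' \<notin> verts G" "v \<noteq> v'" "v \<noteq> 0" "v' \<noteq> 0"
    and b: "b \<in> {3,4}" and p: "p < 8" and pp: "prop_perm p 2 = 1" "prop_perm p 3 = b" "prop_perm p 4 = 7 - b"
  shows "minv \<lparr>par = (par G)(v \<mapsto> x, v' \<mapsto> (v,2), z \<mapsto> (v',2)),
              dsh = add_dash (add_dash (dsh G) (v,3) (v',b)) (v,4) (v',7-b),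
              cor = set_prop (cor G) v v' p\<rparr>" (is "minv ?G'")
proof -
  interpret ins_ctx G v v' p using mi nv p by unfold_locales
  define c where "c = 7 - b"
  define y where "y = (z,1::nat)"
  have p1: "prop_perm p 1 = 2" using p8[OF p] b pp by (auto simp: prop_perm_def)
  have bc: "b \<in> {3,4}" "c \<in> {3,4}" "b \<noteq> c" using b unfolding c_def by auto
  have pp4: "prop_perm p 4 = c" using pp(3) unfolding c_def .
  have zV: "z \<in> verts G" using pz unfolding verts_def by auto
  have zn: "z \<noteq> v" "z \<noteq> v'" "v \<noteq> z" "v' \<noteq> z" using zV nv by auto
  have vG': "verts ?G' = verts G \<union> {v,v'}" using zV unfolding verts_def by auto
  have xyS: "x \<in> all_slots (verts G)" "y \<in> all_slots (verts G)" using parG[OF pz] zV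
    unfolding y_def all_slots_def true_slots_def by auto
  let ?ND = "{((v,3),(v',b)),((v',b),(v,3)),((v,4),(v',c)),((v',c),(v,4))}"
  have D: "dsh ?G' s = Some t \<longleftrightarrow> (s,t) \<in> ?ND \<or> dsh G s = Some t" for s t
    unfolding c_def[symmetric] simp_thms mgraph.simps
  proof (rule dashS)
    show "distinct [(v,3),(v',b),(v,4),(v',c)]" using bc nv(3) by auto
  qed (rule dsh_new, simp)+
  have wf2: "\<forall>w s. par ?G' w = Some s \<longrightarrow> s \<in> all_slots (verts ?G')"
    unfolding vG' using parG all_mono xyS true_new by auto
  have wf3: "\<forall>s t. dsh ?G' s = Some t \<longrightarrow> s \<in> all_slots (verts ?G') \<and> t \<in> all_slots (verts ?G') \<and> dsh ?G' t = Some s"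
  proof (intro allI impI)
    fix s t assume "dsh ?G' s = Some t"
    then consider "(s,t) \<in> ?ND" | "dsh G s = Some t" using D[of s t] by blast
    then show "s \<in> all_slots (verts ?G') \<and> t \<in> all_slots (verts ?G') \<and> dsh ?G' t = Some s"
    proof cases
      case 1
      have sym: "(t,s) \<in> ?ND" using 1 by blast
      have sl: "s \<in> {(v,3),(v',b),(v,4),(v',c)}" "t \<in> {(v,3),(v',b),(v,4),(v',c)}"
        using 1 by blast+
      have "{(v,3),(v',b),(v,4),(v',c)} \<subseteq> all_slots (verts G \<union> {v,v'})"
        using true_new bc by auto
      then show ?thesis unfolding vG' using sl sym D[of t s] by blast
    next
      case 2
      have g: "s \<in> all_slots (verts G)" "t \<in> all_slots (verts G)" "dsh G t = Some s" using dshG[OF 2] by auto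
      have "dsh ?G' t = Some s" using D[of t s] g(3) by blast
      then show ?thesis unfolding vG' using g all_mono by blast
    qed
  qed
  have wf4: "\<forall>s t. cor ?G' s = Some t \<longrightarrow> s \<in> true_slots (verts ?G') \<and> t \<in> true_slots (verts ?G')"
    unfolding vG' using C'_slots by simp
  have xy: "(x,y) \<in> gadj G" using gedgesI_par[OF pz] gadj_sym unfolding y_def by blast
  have N: "{(v,1),(v',2),(v,2),(v',1),(v,3),(v',b),(v,4),(v',c)} = {(v,1),(v,2),(v,3),(v,4),(v',1),(v',2),(v',3),(v',4)}"
    using bc by auto
  have dist: "distinct [(v,1),(v',2),(v,2),(v',1),(v,3),(v',b),(v,4),(v',c)]" using bc nv(3) by auto
  define P where "P = {(x,(v,1)),((v,1),(v',2)),((v',2),y),((v,2),(v',1)),((v,3),(v',b)),((v,4),(v',c))}"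
  have h1: "gedges ?G' \<subseteq> gadj G \<union> (P \<union> P\<inverse>)"
  proof (rule h1_helper)
    fix w s assume "par ?G' w = Some s"
    then show "par G w = Some s \<or> ((w,1),s) \<in> P \<union> P\<inverse>" unfolding P_def y_def by (auto split: if_splits)
  next
    fix s t assume "dsh ?G' s = Some t"
    then show "dsh G s = Some t \<or> (s,t) \<in> P \<union> P\<inverse>" unfolding D P_def by auto
  next
    fix s t assume "cor ?G' s = Some t"
    then have "C' s = Some t" by simp
    moreover have "((v,i),(v',prop_perm p i)) \<in> P" if "i \<in> {1..4}" for i
      using i4[OF that] p1 pp(1,2) pp4 unfolding P_def by auto
    ultimately show "cor G s = Some t \<or> (s,t) \<in> P \<union> P\<inverse>" using cor_in_P by blast
  qed
  have h2: "gedges G - {(x,y),(y,x)} \<subseteq> gadj ?G'"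
  proof (rule h2_helper)
    fix w s assume ws: "par G w = Some s"
    show "par ?G' w = Some s \<or> ((w,1),s) \<in> {(x,y),(y,x)}"
    proof (cases "w = z")
      case True
      then show ?thesis using ws pz unfolding y_def by auto
    next
      case False
      then show ?thesis using ws par_old by auto
    qed
  next
    fix s t assume st: "dsh G s = Some t"
    show "dsh ?G' s = Some t \<or> (s,t) \<in> {(x,y),(y,x)}"
      using st unfolding D by auto
  next
    fix s t assume "cor G s = Some t"
    then show "cor ?G' s = Some t" using C'_old by simp
  qed
  have h3: "P \<subseteq> gadj ?G'"
  proof -
    have 1: "((v,1),x) \<in> gadj ?G'" "((v',1),(v,2)) \<in> gadj ?G'" "((z,1),(v',2)) \<in> gadj ?G'"
      by (rule gedgesI_par; simp add: nv(3) zn)+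
    have 2: "((v,1),(v',2)) \<in> gadj ?G'" using gedgesI_cor[of ?G' "(v,1)" "(v',2)"] C'_new[of 1] p1 by simp
    have 3: "((v,3),(v',b)) \<in> gadj ?G'" "((v,4),(v',c)) \<in> gadj ?G'"
      by (rule gedgesI_dsh; simp only: D; simp)+
    show ?thesis unfolding P_def y_def using 1 2 3 gadj_sym by blast
  qed
  have h1': "gedges ?G' \<subseteq> gadj G \<union> P \<union> P\<inverse>" using h1 by (simp add: Un_assoc)
  have m1: "mate ?G' v = v'" "mate ?G' v' = v" unfolding mate_def using mate_new by simp_all
  have m3: "\<forall>w\<in>verts G. mate ?G' w = mate G w" unfolding mate_def using mate_old by simp
  show ?thesis
    by (rule gen_step[OF mi vG' nv wf2 wf3 wf4 xyS(1,2) xy N dist refl refl _ _ P_def h1' h2 h3 m1 m3]) auto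
qed

lemma step_IIIs:
  assumes mi: "minv G" and pz: "par G z = Some x" and nv: "v \<notin> verts G" "v' \<notin> verts G" "v \<noteq> v'" "v \<noteq> 0" "v' \<noteq> 0"
    and a: "a \<in> {3,4}" and c: "c \<in> {3,4}" and p: "p < 8"
    and pp: "prop_perm p a = 1" "prop_perm p 2 = 7 - c" "prop_perm p (7 - a) = 2"
  shows "minv \<lparr>par = (par G)(v \<mapsto> x, v' \<mapsto> (v,a), z \<mapsto> (v',c)),
              dsh = add_dash (add_dash (dsh G) (v,2) (v',7-c)) (v,7-a) (v',2),
              cor = set_prop (cor G) v v' p\<rparr>" (is "minv ?G'")
proof -
  interpret ins_ctx G v v' p using mi nv p by unfold_locales
  define e where "e = 7 - a"
  define f where "f = 7 - c"
  define y where "y = (z,1::nat)"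
  have p1: "prop_perm p 1 = c" using p8[OF p] a c pp by (auto simp: prop_perm_def)
  have ae: "a \<in> {3,4}" "e \<in> {3,4}" "a \<noteq> e" "c \<in> {3,4}" "f \<in> {3,4}" "c \<noteq> f" using a c unfolding e_def f_def by auto
  have ppe: "prop_perm p e = 2" using pp(3) unfolding e_def .
  have pp2: "prop_perm p 2 = f" using pp(2) unfolding f_def .
  have zV: "z \<in> verts G" using pz unfolding verts_def by auto
  have zn: "z \<noteq> v" "z \<noteq> v'" "v \<noteq> z" "v' \<noteq> z" using zV nv by auto
  have vG': "verts ?G' = verts G \<union> {v,v'}" using zV unfolding verts_def by auto
  have xyS: "x \<in> all_slots (verts G)" "y \<in> all_slots (verts G)" using parG[OF pz] zV
    unfolding y_def all_slots_def true_slots_def by auto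
  let ?ND = "{((v,2),(v',f)),((v',f),(v,2)),((v,e),(v',2)),((v',2),(v,e))}"
  have D: "dsh ?G' s = Some t \<longleftrightarrow> (s,t) \<in> ?ND \<or> dsh G s = Some t" for s t
    unfolding e_def[symmetric] f_def[symmetric] simp_thms mgraph.simps
  proof (rule dashS)
    show "distinct [(v,2),(v',f),(v,e),(v',2)]" using ae nv(3) by auto
  qed (rule dsh_new, simp)+
  have wf2: "\<forall>w s. par ?G' w = Some s \<longrightarrow> s \<in> all_slots (verts ?G')"
    unfolding vG' using parG all_mono xyS true_new ae by auto
  have wf3: "\<forall>s t. dsh ?G' s = Some t \<longrightarrow> s \<in> all_slots (verts ?G') \<and> t \<in> all_slots (verts ?G') \<and> dsh ?G' t = Some s"
  proof (intro allI impI)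
    fix s t assume "dsh ?G' s = Some t"
    then consider "(s,t) \<in> ?ND" | "dsh G s = Some t" using D[of s t] by blast
    then show "s \<in> all_slots (verts ?G') \<and> t \<in> all_slots (verts ?G') \<and> dsh ?G' t = Some s"
    proof cases
      case 1
      have sym: "(t,s) \<in> ?ND" using 1 by blast
      have sl: "s \<in> {(v,2),(v',f),(v,e),(v',2)}" "t \<in> {(v,2),(v',f),(v,e),(v',2)}"
        using 1 by blast+
      have "{(v,2),(v',f),(v,e),(v',2)} \<subseteq> all_slots (verts G \<union> {v,v'})"
        using true_new ae by auto
      then show ?thesis unfolding vG' using sl sym D[of t s] by blast
    next
      case 2
      have g: "s \<in> all_slots (verts G)" "t \<in> all_slots (verts G)" "dsh G t = Some s" using dshG[OF 2] by auto
      have "dsh ?G' t = Some s" using D[of t s] g(3) by blast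
      then show ?thesis unfolding vG' using g all_mono by blast
    qed
  qed
  have wf4: "\<forall>s t. cor ?G' s = Some t \<longrightarrow> s \<in> true_slots (verts ?G') \<and> t \<in> true_slots (verts ?G')"
    unfolding vG' using C'_slots by simp
  have xy: "(x,y) \<in> gadj G" using gedgesI_par[OF pz] gadj_sym unfolding y_def by blast
  have N: "{(v,1),(v',c),(v,2),(v',f),(v,a),(v',1),(v,e),(v',2)} = {(v,1),(v,2),(v,3),(v,4),(v',1),(v',2),(v',3),(v',4)}"
    using ae by auto
  have dist: "distinct [(v,1),(v',c),(v,2),(v',f),(v,a),(v',1),(v,e),(v',2)]" using ae nv(3) by auto
  define P where "P = {(x,(v,1)),((v,1),(v',c)),((v',c),y),((v,2),(v',f)),((v,a),(v',1)),((v,e),(v',2))}"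
  have h1: "gedges ?G' \<subseteq> gadj G \<union> (P \<union> P\<inverse>)"
  proof (rule h1_helper)
    fix w s assume "par ?G' w = Some s"
    then show "par G w = Some s \<or> ((w,1),s) \<in> P \<union> P\<inverse>" unfolding P_def y_def by (auto split: if_splits)
  next
    fix s t assume "dsh ?G' s = Some t"
    then show "dsh G s = Some t \<or> (s,t) \<in> P \<union> P\<inverse>" unfolding D P_def by auto
  next
    fix s t assume "cor ?G' s = Some t"
    then have "C' s = Some t" by simp
    moreover have "((v,i),(v',prop_perm p i)) \<in> P" if "i \<in> {1..4}" for i
    proof -
      have "i = 1 \<or> i = 2 \<or> i = a \<or> i = e" using i4[OF that] ae by auto
      then show ?thesis using p1 pp(1) pp2 ppe unfolding P_def by auto
    qed
    ultimately show "cor G s = Some t \<or> (s,t) \<in> P \<union> P\<inverse>" using cor_in_P by blast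
  qed
  have h2: "gedges G - {(x,y),(y,x)} \<subseteq> gadj ?G'"
  proof (rule h2_helper)
    fix w s assume ws: "par G w = Some s"
    show "par ?G' w = Some s \<or> ((w,1),s) \<in> {(x,y),(y,x)}"
    proof (cases "w = z")
      case True
      then show ?thesis using ws pz unfolding y_def by auto
    next
      case False
      then show ?thesis using ws par_old by auto
    qed
  next
    fix s t assume st: "dsh G s = Some t"
    show "dsh ?G' s = Some t \<or> (s,t) \<in> {(x,y),(y,x)}"
      using st unfolding D by auto
  next
    fix s t assume "cor G s = Some t"
    then show "cor ?G' s = Some t" using C'_old by simp
  qed
  have h3: "P \<subseteq> gadj ?G'"
  proof -
    have 1: "((v,1),x) \<in> gadj ?G'" "((v',1),(v,a)) \<in> gadj ?G'" "((z,1),(v',c)) \<in> gadj ?G'"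
      by (rule gedgesI_par; simp add: nv(3) zn)+
    have 2: "((v,1),(v',c)) \<in> gadj ?G'" using gedgesI_cor[of ?G' "(v,1)" "(v',c)"] C'_new[of 1] p1 by simp
    have 3: "((v,2),(v',f)) \<in> gadj ?G'" "((v,e),(v',2)) \<in> gadj ?G'"
      by (rule gedgesI_dsh; simp only: D; simp)+
    show ?thesis unfolding P_def y_def using 1 2 3 gadj_sym by blast
  qed
  have h1': "gedges ?G' \<subseteq> gadj G \<union> P \<union> P\<inverse>" using h1 by (simp add: Un_assoc)
  have m1: "mate ?G' v = v'" "mate ?G' v' = v" unfolding mate_def using mate_new by simp_all
  have m3: "\<forall>w\<in>verts G. mate ?G' w = mate G w" unfolding mate_def using mate_old by simp
  show ?thesis
    by (rule gen_step[OF mi vG' nv wf2 wf3 wf4 xyS(1,2) xy N dist refl refl _ _ P_def h1' h2 h3 m1 m3]) (use ae in auto)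
qed

lemma melonic_minv: "melonic G \<Longrightarrow> minv G"
proof (induction rule: melonic.induct)
  case triv
  then show ?case by (rule minv_triv)
next
  case (insI G x y v v' b p)
  then show ?case by (intro step_I) auto
next
  case (insII G z z' v v' b p)
  then show ?case by (intro step_II) auto
next
  case (insIII G z z' v v' a c p)
  then show ?case by (intro step_III) auto
next
  case (insIIs G z s v v' b p)
  then show ?case by (intro step_IIs) auto
next
  case (insIIIs G z s v v' a c p)
  then show ?case by (intro step_IIIs) auto
qed

theorem lemma5:
  fixes n :: nat and G :: mgraph
  assumes "is_graph n G"
    and "melonic G"
  shows "degree G = 0"
  using degree_zero[OF melonic_minv[OF assms(2)]] .


end
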